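(* Let $\mathbf{k}$ be a commutative ring and $n\ge0$. Let $\beta=(\beta_1,\dots,\beta_p)$ and $\gamma=(\gamma_1,\dots,\gamma_p)$ be two compositions of $n$ having the same length $p$. Then, in $F_{n,n}$, \[\mathbf{V}_\beta\,\mathbf{B}_\gamma=\sum_{\substack{\chi\in S_p;\\ \beta_{\chi(i)}=\gamma_i\text{ for each }i}}V^{\operatorname{Set}(\beta)_{\chi(1)}}V^{\operatorname{Set}(\beta)_{\chi(2)}}\cdots V^{\operatorname{Set}(\beta)_{\chi(p)}}.\]
   Context: $S_n$ is the symmetric group on $[n]$, with product $(uw)(i)=u(w(i))$; $\operatorname{Des}(u)=\{i\in[n-1]:u(i)>u(i+1)\}$; for $I\subseteq[n-1]$, $\mathbf{B}_I=\sum_{u\in S_n,\ \operatorname{Des}(u)\subseteq I}u\in\mathbf{k}[S_n]$. For a composition $\alpha=(\alpha_1,\dots,\alpha_p)$ of $n$ (positive integers summing to $n$), $\operatorname{Set}(\alpha)=\{\alpha_1,\alpha_1+\alpha_2,\dots,\alpha_1+\cdots+\alpha_{p-1}\}$, $\mathbf{B}_\alpha:=\mathbf{B}_{\operatorname{Set}(\alpha)}$, $\alpha_{\le i}=\alpha_1+\cdots+\alpha_i$, and the $\alpha$-blocks are $\operatorname{Set}(\alpha)_i=\{\alpha_{\le i-1}+1,\dots,\alpha_{\le i}\}$ for $i\in[p]$. $F_n$ is the free associative $\mathbf{k}$-algebra on letters $\underline1,\dots,\underline n$ (linear span of words over $[n]$, multiplication = concatenation), and $F_{n,k}$ is its span of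 words of length $k$. $S_k$ acts on $F_{n,k}$ from the right by $(\underline{w_1}\cdots\underline{w_k})\cdot\sigma=\underline{w_{\sigma(1)}}\cdots\underline{w_{\sigma(k)}}$, extended linearly to a right $\mathbf{k}[S_k]$-action. For $a,b\in F_n$, $[a,b]=ab-ba$. For nonempty $S\subseteq[n]$ with elements $s_1<\cdots<s_k$, $V^S=[[\cdots[[\underline{s_1},\underline{s_2}],\underline{s_3}],\dots],\underline{s_k}]$ ($=\underline{s_1}$ if $k=1$). For a composition $\alpha$ with $p$ parts, $\mathbf{V}_\alpha=V^{\operatorname{Set}(\alpha)_1}V^{\operatorname{Set}(\alpha)_2}\cdots V^{\operatorname{Set}(\alpha)_p}\in F_{n,n}$, and $\mathbf{V}_\beta\mathbf{B}_\gamma$ denotes the right action of $\mathbf{B}_\gamma\in\mathbf{k}[S_n]$ on $\mathbf{V}_\beta$. *)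

theory Defs
  imports "HOL-Combinatorics.Permutations" "HOL-Library.Function_Algebras"
begin

text \<open>Elements of the free algebra F_n over a commutative ring 'k are represented by
their coefficient functions on words (lists of letters, letters are naturals in [n]).\<close>

type_synonym 'k fa = "nat list \<Rightarrow> 'k"

definition fone :: "'k::comm_ring_1 fa" where
  "fone = (\<lambda>w. if w = [] then 1 else 0)"

definition letter :: "nat \<Rightarrow> 'k::comm_ring_1 fa" where
  "letter i = (\<lambda>w. if w = [i] then 1 else 0)"

definition fmul :: "'k::comm_ring_1 fa \<Rightarrow> 'k fa \<Rightarrow> 'k fa" where
  "fmul a b = (\<lambda>w. \<Sum>i\<in>{0..length w}. a (take i w) * b (drop i w))"

definition fprod :: "'k::comm_ring_1 fa list \<Rightarrow> 'k fa" where
  "fprod xs = foldr fmul xs fone"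

definition comm :: "'k::comm_ring_1 fa \<Rightarrow> 'k fa \<Rightarrow> 'k fa" where
  "comm a b = (\<lambda>w. fmul a b w - fmul b a w)"

definition Vset :: "nat set \<Rightarrow> 'k::comm_ring_1 fa" where
  "Vset S = (case sorted_list_of_set S of
               [] \<Rightarrow> (\<lambda>_. 0)
             | s # ss \<Rightarrow> foldl (\<lambda>acc x. comm acc (letter x)) (letter s) ss)"

definition composition :: "nat \<Rightarrow> nat list \<Rightarrow> bool" where
  "composition n \<alpha> \<longleftrightarrow> (\<forall>a\<in>set \<alpha>. 0 < a) \<and> sum_list \<alpha> = n"

definition SetC :: "nat list \<Rightarrow> nat set" where
  "SetC \<alpha> = {sum_list (take i \<alpha>) | i. 1 \<le> i \<and> i \<le> length \<alpha> - 1}"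

text \<open>The i-th alpha-block (1-indexed).\<close>
definition block :: "nat list \<Rightarrow> nat \<Rightarrow> nat set" where
  "block \<alpha> i = {sum_list (take (i - 1) \<alpha>) + 1 .. sum_list (take i \<alpha>)}"

definition Vcomp :: "nat list \<Rightarrow> 'k::comm_ring_1 fa" where
  "Vcomp \<alpha> = fprod (map (\<lambda>i. Vset (block \<alpha> i)) [1..<length \<alpha> + 1])"

definition Des :: "nat \<Rightarrow> (nat \<Rightarrow> nat) \<Rightarrow> nat set" where
  "Des n u = {i \<in> {1..n - 1}. u i > u (i + 1)}"

definition act :: "nat list \<Rightarrow> (nat \<Rightarrow> nat) \<Rightarrow> nat list" where
  "act w s = map (\<lambda>j. w ! (s j - 1)) [1..<length w + 1]"

definition ract :: "nat \<Rightarrow> 'k::comm_ring_1 fa \<Rightarrow> (nat \<Rightarrow> nat) \<Rightarrow> 'k fa" where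
  "ract n f s = (\<lambda>w'. \<Sum>w\<in>{w. length w = length w' \<and> set w \<subseteq> {1..n}}.
                         if act w s = w' then f w else 0)"

definition ractB :: "nat \<Rightarrow> 'k::comm_ring_1 fa \<Rightarrow> nat set \<Rightarrow> 'k fa" where
  "ractB n f I = (\<Sum>u\<in>{u. u permutes {1..n} \<and> Des n u \<subseteq> I}. ract n f u)"

end

theory Submission
  imports Defs
begin


lemma sum_fun_apply: "(\<Sum>u\<in>A. (f u :: 'a \<Rightarrow> 'b::comm_monoid_add)) w = (\<Sum>u\<in>A. f u w)"
  by (induction A rule: infinite_finite_induct) auto

definition homog :: "nat \<Rightarrow> 'k::comm_ring_1 fa \<Rightarrow> bool" where
  "homog d f \<longleftrightarrow> (\<forall>w. f w \<noteq> 0 \<longrightarrow> length w = d)"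

definition lsupp :: "nat set \<Rightarrow> 'k::comm_ring_1 fa \<Rightarrow> bool" where
  "lsupp A f \<longleftrightarrow> (\<forall>w. f w \<noteq> 0 \<longrightarrow> set w \<subseteq> A)"

lemma homogD: "homog d f \<Longrightarrow> length w \<noteq> d \<Longrightarrow> f w = 0"
  unfolding homog_def by auto

lemma lsuppD: "lsupp A f \<Longrightarrow> \<not> set w \<subseteq> A \<Longrightarrow> f w = 0"
  unfolding lsupp_def by auto

lemma homog_fone: "homog 0 fone"
  unfolding homog_def fone_def by auto

lemma homog_letter: "homog 1 (letter a)"
  unfolding homog_def letter_def by auto

lemma fmul_homog_left:
  assumes "homog d a" "d \<le> length w"
  shows "fmul a b w = a (take d w) * b (drop d w)"
proof -
  have "fmul a b w = (\<Sum>i\<in>{d}. a (take i w) * b (drop i w))"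
    unfolding fmul_def
    by (rule sum.mono_neutral_right) (use assms in \<open>auto simp: homogD\<close>)
  then show ?thesis by simp
qed

lemma fmul_homog_left0:
  assumes "homog d a" "\<not> d \<le> length w"
  shows "fmul a b w = 0"
  unfolding fmul_def
  by (rule sum.neutral) (use assms in \<open>auto simp: homogD\<close>)

lemma homog_fmul: assumes ha: "homog d a" and hb: "homog e b" shows "homog (d + e) (fmul a b)"
  unfolding homog_def
proof (intro allI impI)
  fix w assume ne: "fmul a b w \<noteq> 0"
  have dl: "d \<le> length w"
  proof (rule ccontr)
    assume "\<not> d \<le> length w"
    then have "fmul a b w = 0" by (rule fmul_homog_left0[OF ha])
    then show False using ne by simp
  qed
  then have "a (take d w) * b (drop d w) \<noteq> 0" using ne fmul_homog_left[OF ha dl] by simp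
  then have "b (drop d w) \<noteq> 0" by auto
  then have "length (drop d w) = e" using hb unfolding homog_def by blast
  then show "length w = d + e" using dl by simp
qed

lemma homog_comm: assumes "homog d a" "homog e b" shows "homog (d + e) (comm a b)"
proof -
  have 1: "homog (d+e) (fmul a b)" using homog_fmul assms by blast
  have 2: "homog (d+e) (fmul b a)" using homog_fmul[OF assms(2,1)] by (simp add: add.commute)
  show ?thesis unfolding homog_def comm_def
    using 1 2 unfolding homog_def by force
qed

lemma lsupp_fone: "lsupp A fone"
  unfolding lsupp_def fone_def by auto

lemma lsupp_letter: "a \<in> A \<Longrightarrow> lsupp A (letter a)"
  unfolding lsupp_def letter_def by auto

lemma lsupp_fmul: assumes ha: "lsupp A a" and hb: "lsupp A b" shows "lsupp A (fmul a b)"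
  unfolding lsupp_def
proof (intro allI impI)
  fix w assume ne: "fmul a b w \<noteq> 0"
  then obtain i where "a (take i w) * b (drop i w) \<noteq> 0"
    unfolding fmul_def using sum.not_neutral_contains_not_neutral by blast
  then have "a (take i w) \<noteq> 0" "b (drop i w) \<noteq> 0" by auto
  then have "set (take i w) \<subseteq> A" "set (drop i w) \<subseteq> A" using ha hb unfolding lsupp_def by blast+
  moreover have "set w = set (take i w) \<union> set (drop i w)"
    by (metis append_take_drop_id set_append)
  ultimately show "set w \<subseteq> A" by blast
qed

lemma lsupp_comm: assumes "lsupp A a" "lsupp A b" shows "lsupp A (comm a b)"
proof -
  have 1: "lsupp A (fmul a b)" "lsupp A (fmul b a)" using lsupp_fmul assms by blast+
  show ?thesis unfolding lsupp_def comm_def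
    using 1 unfolding lsupp_def by force
qed

lemma fmul_fone_right: "fmul a fone = a"
proof
  fix w
  have "fmul a fone w = (\<Sum>i\<in>{length w}. a (take i w) * fone (drop i w))"
    unfolding fmul_def
    by (rule sum.mono_neutral_right) (auto simp: fone_def)
  then show "fmul a fone w = a w" by (simp add: fone_def)
qed


definition merge :: "nat list \<Rightarrow> 'a list list \<Rightarrow> 'a list" where
  "merge cs xs = map (\<lambda>j. xs!(cs!j)!(count_list (take j cs) (cs!j))) [0..<length cs]"

definition CL :: "'a list list \<Rightarrow> nat list set" where
  "CL xs = {cs. set cs \<subseteq> {..<length xs} \<and> (\<forall>k<length xs. count_list cs k = length (xs!k))}"

definition cdelta :: "'k::comm_ring_1 fa \<Rightarrow> nat list list \<Rightarrow> 'k" where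
  "cdelta f xs = (\<Sum>cs\<in>CL xs. f (merge cs xs))"

definition NS :: "'a list list \<Rightarrow> nat list set" where
  "NS xs = {ns. length ns = length xs \<and> (\<forall>k<length xs. ns!k \<le> length (xs!k))}"

definition tk :: "nat list \<Rightarrow> 'a list list \<Rightarrow> 'a list list" where
  "tk ns xs = map (\<lambda>k. take (ns!k) (xs!k)) [0..<length xs]"

definition dr :: "nat list \<Rightarrow> 'a list list \<Rightarrow> 'a list list" where
  "dr ns xs = map (\<lambda>k. drop (ns!k) (xs!k)) [0..<length xs]"

definition cnt :: "nat list \<Rightarrow> nat \<Rightarrow> nat list" where
  "cnt c p = map (count_list c) [0..<p]"

lemma length_merge[simp]: "length (merge cs xs) = length cs"
  by (simp add: merge_def)

lemma nth_merge: "j < length cs \<Longrightarrow> merge cs xs ! j = xs!(cs!j)!(count_list (take j cs) (cs!j))"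
  by (simp add: merge_def)

lemma length_tk[simp]: "length (tk ns xs) = length xs" by (simp add: tk_def)
lemma length_dr[simp]: "length (dr ns xs) = length xs" by (simp add: dr_def)
lemma nth_tk[simp]: "k < length xs \<Longrightarrow> tk ns xs ! k = take (ns!k) (xs!k)" by (simp add: tk_def)
lemma nth_dr[simp]: "k < length xs \<Longrightarrow> dr ns xs ! k = drop (ns!k) (xs!k)" by (simp add: dr_def)
lemma length_cnt[simp]: "length (cnt c p) = p" by (simp add: cnt_def)
lemma nth_cnt[simp]: "k < p \<Longrightarrow> cnt c p ! k = count_list c k" by (simp add: cnt_def)

lemma CL_length:
  assumes "cs \<in> CL xs" shows "length cs = (\<Sum>k<length xs. length (xs!k))"
proof -
  have ss: "set cs \<subseteq> {..<length xs}" using assms by (simp add: CL_def)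
  have "length cs = sum (count_list cs) {..<length xs}"
    using sum_count_set[OF ss] by simp
  also have "\<dots> = (\<Sum>k<length xs. length (xs!k))"
  proof (rule sum.cong)
    fix k assume "k \<in> {..<length xs}"
    then show "count_list cs k = length (xs!k)" using assms by (simp add: CL_def)
  qed simp
  finally show ?thesis .
qed

lemma finite_CL: "finite (CL xs)"
proof (rule finite_subset)
  show "CL xs \<subseteq> {cs. set cs \<subseteq> {..<length xs} \<and> length cs = (\<Sum>k<length xs. length (xs!k))}"
    using CL_length by (auto simp: CL_def)
  show "finite \<dots>" by (rule finite_lists_length_eq) simp
qed

lemma finite_NS: "finite (NS xs)"
proof (rule finite_subset)
  show "NS xs \<subseteq> {ns. set ns \<subseteq> {..(\<Sum>k<length xs. length (xs!k))} \<and> length ns = length xs}"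
  proof
    fix ns assume ns: "ns \<in> NS xs"
    have "set ns \<subseteq> {..(\<Sum>k<length xs. length (xs!k))}"
    proof
      fix x assume "x \<in> set ns"
      then obtain k where k: "k < length ns" "ns!k = x" by (auto simp: in_set_conv_nth)
      then have "x \<le> length (xs!k)" "k < length xs" using ns by (auto simp: NS_def)
      moreover have "length (xs!k) \<le> (\<Sum>k<length xs. length (xs!k))"
        using \<open>k < length xs\<close> by (intro member_le_sum) auto
      ultimately show "x \<in> {..(\<Sum>k<length xs. length (xs!k))}" by simp
    qed
    then show "ns \<in> {ns. set ns \<subseteq> {..(\<Sum>k<length xs. length (xs!k))} \<and> length ns = length xs}"
      using ns by (simp add: NS_def)
  qed
  show "finite \<dots>" by (rule finite_lists_length_eq) simp
qed

lemma merge_take: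
  assumes "i \<le> length cs" shows "take i (merge cs xs) = merge (take i cs) xs"
proof (rule nth_equalityI)
  fix j assume "j < length (take i (merge cs xs))"
  then have j: "j < i" "j < length cs" using assms by auto
  have "take i (merge cs xs) ! j = merge cs xs ! j" using j by simp
  also have "\<dots> = xs!(cs!j)!(count_list (take j cs) (cs!j))" using j by (simp add: nth_merge)
  also have "\<dots> = merge (take i cs) xs ! j" using j by (simp add: nth_merge min_def)
  finally show "take i (merge cs xs) ! j = merge (take i cs) xs ! j" .
qed (use assms in simp)

lemma count_take_le: "count_list (take i cs) k \<le> count_list cs k"
  by (metis append_take_drop_id count_list_append le_add1)

lemma merge_drop:
  assumes "cs \<in> CL xs"
  shows "drop i (merge cs xs) = merge (drop i cs) (dr (cnt (take i cs) (length xs)) xs)"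
proof (rule nth_equalityI)
  show "length (drop i (merge cs xs)) = length (merge (drop i cs) (dr (cnt (take i cs) (length xs)) xs))"
    by simp
  fix j assume "j < length (drop i (merge cs xs))"
  then have j: "i + j < length cs" by simp
  define c where "c = cs ! (i + j)"
  have cp: "c < length xs" using assms nth_mem[OF j] by (auto simp: CL_def c_def)
  have le: "count_list (take i cs) c \<le> length (xs!c)"
    using assms cp count_take_le[of i cs c] by (auto simp: CL_def)
  have "drop i (merge cs xs) ! j = xs!c!(count_list (take (i+j) cs) c)"
    using j by (simp add: nth_merge c_def)
  also have "\<dots> = xs!c!(count_list (take i cs) c + count_list (take j (drop i cs)) c)"
    by (simp add: take_add)
  also have "\<dots> = merge (drop i cs) (dr (cnt (take i cs) (length xs)) xs) ! j"
    using j cp le by (simp add: nth_merge c_def)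
  finally show "drop i (merge cs xs) ! j = merge (drop i cs) (dr (cnt (take i cs) (length xs)) xs) ! j" .
qed

lemma merge_tk:
  assumes "c \<in> CL (tk ns xs)" "length ns = length xs"
  shows "merge c (tk ns xs) = merge c xs"
proof (rule nth_equalityI)
  fix j assume "j < length (merge c (tk ns xs))"
  then have j: "j < length c" by simp
  define k where "k = c ! j"
  have kp: "k < length xs" using assms nth_mem[OF j] by (auto simp: CL_def k_def)
  have "count_list (take j c) k < count_list (take (Suc j) c) k"
    using j by (simp add: take_Suc_conv_app_nth k_def)
  also have "\<dots> \<le> count_list c k" by (rule count_take_le)
  also have "\<dots> = length (take (ns!k) (xs!k))" using assms kp by (auto simp: CL_def)
  finally have "count_list (take j c) k < ns ! k" by simp
  then show "merge c (tk ns xs) ! j = merge c xs ! j"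
    using j kp by (simp add: nth_merge k_def)
qed simp


lemma cnt_CL_tk:
  assumes "c1 \<in> CL (tk ns xs)" "ns \<in> NS xs"
  shows "cnt c1 (length xs) = ns"
proof (rule nth_equalityI)
  show "length (cnt c1 (length xs)) = length ns" using assms by (simp add: NS_def)
  fix k assume "k < length (cnt c1 (length xs))"
  then have k: "k < length xs" by simp
  have "cnt c1 (length xs) ! k = count_list c1 k" using k by simp
  also have "\<dots> = length (take (ns!k) (xs!k))" using assms(1) k by (simp add: CL_def)
  also have "\<dots> = ns ! k" using assms(2) k by (simp add: NS_def)
  finally show "cnt c1 (length xs) ! k = ns ! k" .
qed

lemma fmul_cdelta:
  "cdelta (fmul a b) xs = (\<Sum>ns\<in>NS xs. cdelta a (tk ns xs) * cdelta b (dr ns xs))"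
proof -
  define p where "p = length xs"
  define T where "T = (SIGMA cs:CL xs. {0..length cs})"
  define S where "S = (SIGMA ns:NS xs. SIGMA c1:CL (tk ns xs). CL (dr ns xs))"
  define h where "h = (\<lambda>(cs, i). a (merge (take i cs) xs) * b (merge (drop i cs) (dr (cnt (take i cs) p) xs)))"
  define g where "g = (\<lambda>(ns, c1, c2). a (merge c1 (tk ns xs)) * b (merge c2 (dr ns xs)))"
  have "cdelta (fmul a b) xs = (\<Sum>cs\<in>CL xs. \<Sum>i\<in>{0..length cs}. a (take i (merge cs xs)) * b (drop i (merge cs xs)))"
    unfolding cdelta_def fmul_def by simp
  also have "\<dots> = (\<Sum>cs\<in>CL xs. \<Sum>i\<in>{0..length cs}. h (cs, i))"
  proof (rule sum.cong[OF refl], rule sum.cong[OF refl])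
    fix cs i assume "cs \<in> CL xs" "i \<in> {0..length cs}"
    then show "a (take i (merge cs xs)) * b (drop i (merge cs xs)) = h (cs, i)"
      unfolding h_def p_def by (simp add: merge_take merge_drop)
  qed
  also have "\<dots> = sum h T"
    unfolding T_def using sum.Sigma[of "CL xs" "\<lambda>cs. {0..length cs}" "\<lambda>cs i. h (cs, i)"]
    by (simp add: finite_CL)
  also have "\<dots> = sum g S"
  proof (rule sum.reindex_bij_witness[where i = "\<lambda>(ns, c1, c2). (c1 @ c2, length c1)"
        and j = "\<lambda>(cs, i). (cnt (take i cs) p, take i cs, drop i cs)"])
    fix t assume t: "t \<in> S"
    obtain ns c1 c2 where tt: "t = (ns, c1, c2)" by (cases t) auto
    have ns: "ns \<in> NS xs" and c1: "c1 \<in> CL (tk ns xs)" and c2: "c2 \<in> CL (dr ns xs)"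
      using t by (auto simp: S_def tt)
    have cn: "cnt c1 p = ns" using cnt_CL_tk[OF c1 ns] by (simp add: p_def)
    show "(case (case t of (ns, c1, c2) \<Rightarrow> (c1 @ c2, length c1)) of
           (cs, i) \<Rightarrow> (cnt (take i cs) p, take i cs, drop i cs)) = t"
      using cn by (simp add: tt)
    have "c1 @ c2 \<in> CL xs"
      unfolding CL_def
    proof (intro CollectI conjI allI impI)
      show "set (c1 @ c2) \<subseteq> {..<length xs}" using c1 c2 by (auto simp: CL_def)
      fix k assume k: "k < length xs"
      have "count_list (c1 @ c2) k = length (take (ns!k) (xs!k)) + length (drop (ns!k) (xs!k))"
        using c1 c2 k by (simp add: CL_def)
      also have "\<dots> = length (xs!k)" using ns k by (simp add: NS_def)
      finally show "count_list (c1 @ c2) k = length (xs ! k)" .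
    qed
    then show "(case t of (ns, c1, c2) \<Rightarrow> (c1 @ c2, length c1)) \<in> T"
      by (simp add: tt T_def)
  next
    fix u assume u: "u \<in> T"
    obtain cs i where uu: "u = (cs, i)" by (cases u) auto
    have cs: "cs \<in> CL xs" and i: "i \<le> length cs" using u by (auto simp: T_def uu)
    show "(case (case u of (cs, i) \<Rightarrow> (cnt (take i cs) p, take i cs, drop i cs)) of
           (ns, c1, c2) \<Rightarrow> (c1 @ c2, length c1)) = u"
      using i by (simp add: uu)
    have ns: "cnt (take i cs) p \<in> NS xs"
      unfolding NS_def
    proof (intro CollectI conjI allI impI)
      show "length (cnt (take i cs) p) = length xs" by (simp add: p_def)
      fix k assume k: "k < length xs"
      have "cnt (take i cs) p ! k = count_list (take i cs) k" using k by (simp add: p_def)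
      also have "\<dots> \<le> count_list cs k" by (rule count_take_le)
      also have "\<dots> = length (xs!k)" using cs k by (simp add: CL_def)
      finally show "cnt (take i cs) p ! k \<le> length (xs ! k)" .
    qed
    have c1: "take i cs \<in> CL (tk (cnt (take i cs) p) xs)"
      unfolding CL_def
    proof (intro CollectI conjI allI impI)
      show "set (take i cs) \<subseteq> {..<length (tk (cnt (take i cs) p) xs)}"
        using cs set_take_subset[of i cs] by (auto simp: CL_def)
      fix k assume "k < length (tk (cnt (take i cs) p) xs)"
      then have k: "k < length xs" by simp
      have "count_list (take i cs) k \<le> count_list cs k" by (rule count_take_le)
      also have "\<dots> = length (xs!k)" using cs k by (simp add: CL_def)
      finally show "count_list (take i cs) k = length (tk (cnt (take i cs) p) xs ! k)"
        using k by (simp add: p_def)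
    qed
    have c2: "drop i cs \<in> CL (dr (cnt (take i cs) p) xs)"
      unfolding CL_def
    proof (intro CollectI conjI allI impI)
      show "set (drop i cs) \<subseteq> {..<length (dr (cnt (take i cs) p) xs)}"
        using cs set_drop_subset[of i cs] by (auto simp: CL_def)
      fix k assume "k < length (dr (cnt (take i cs) p) xs)"
      then have k: "k < length xs" by simp
      have "count_list cs k = count_list (take i cs) k + count_list (drop i cs) k"
        by (metis append_take_drop_id count_list_append)
      moreover have "count_list cs k = length (xs!k)" using cs k by (simp add: CL_def)
      ultimately show "count_list (drop i cs) k = length (dr (cnt (take i cs) p) xs ! k)"
        using k by (simp add: p_def)
    qed
    show "(case u of (cs, i) \<Rightarrow> (cnt (take i cs) p, take i cs, drop i cs)) \<in> S"
      using ns c1 c2 by (simp add: uu S_def)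
    show "g (case u of (cs, i) \<Rightarrow> (cnt (take i cs) p, take i cs, drop i cs)) = h u"
      using merge_tk[OF c1] by (simp add: uu h_def g_def p_def)
  qed
  also have "\<dots> = (\<Sum>ns\<in>NS xs. \<Sum>c1\<in>CL (tk ns xs). \<Sum>c2\<in>CL (dr ns xs). g (ns, c1, c2))"
  proof -
    have "(\<Sum>c1\<in>CL (tk ns xs). \<Sum>c2\<in>CL (dr ns xs). g (ns, c1, c2))
         = sum (\<lambda>(c1,c2). g (ns, c1, c2)) (SIGMA c1:CL (tk ns xs). CL (dr ns xs))" for ns
      using sum.cartesian_product[of "\<lambda>c1 c2. g (ns, c1, c2)"] by (simp add: split_def)
    then have "(\<Sum>ns\<in>NS xs. \<Sum>c1\<in>CL (tk ns xs). \<Sum>c2\<in>CL (dr ns xs). g (ns, c1, c2))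
       = (\<Sum>ns\<in>NS xs. sum (\<lambda>(c1,c2). g (ns, c1, c2)) (SIGMA c1:CL (tk ns xs). CL (dr ns xs)))"
      by simp
    also have "\<dots> = sum g S"
      unfolding S_def using sum.Sigma[of "NS xs" "\<lambda>ns. SIGMA c1:CL (tk ns xs). CL (dr ns xs)" "\<lambda>ns c. g (ns, c)"]
      by (simp add: finite_NS finite_CL split_def)
    finally show ?thesis by simp
  qed
  also have "\<dots> = (\<Sum>ns\<in>NS xs. cdelta a (tk ns xs) * cdelta b (dr ns xs))"
    unfolding cdelta_def g_def by (simp add: sum_product)
  finally show ?thesis .
qed


lemma count_list_replicate: "count_list (replicate m a) b = (if a = b then m else 0)"
  by (induction m) auto

lemma cdelta_single:
  assumes k: "k < length xs" and z: "\<forall>l<length xs. l \<noteq> k \<longrightarrow> xs!l = []"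
  shows "cdelta f xs = f (xs!k)"
proof -
  define m where "m = length (xs!k)"
  have "CL xs = {replicate m k}"
  proof
    show "CL xs \<subseteq> {replicate m k}"
    proof
      fix cs assume cs: "cs \<in> CL xs"
      have "\<forall>c\<in>set cs. c = k"
      proof
        fix c assume c: "c \<in> set cs"
        then have cp: "c < length xs" using cs by (auto simp: CL_def)
        have "count_list cs c \<noteq> 0" using c by (simp add: count_list_0_iff)
        then have "xs!c \<noteq> []" using cs cp by (auto simp: CL_def)
        then show "c = k" using z cp by blast
      qed
      then have "cs = replicate (length cs) k" using replicate_length_same by metis
      moreover have "length cs = m"
      proof -
        have "count_list cs k = m" using cs k by (simp add: CL_def m_def)
        moreover have "count_list (replicate (length cs) k) k = length cs" by (simp add: count_list_replicate)
        ultimately show ?thesis using \<open>cs = replicate (length cs) k\<close> by metis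
      qed
      ultimately show "cs \<in> {replicate m k}" by simp
    qed
    show "{replicate m k} \<subseteq> CL xs"
      using k z by (auto simp: CL_def count_list_replicate m_def)
  qed
  moreover have "merge (replicate m k) xs = xs!k"
    by (rule nth_equalityI) (auto simp: m_def nth_merge count_list_replicate min_def)
  ultimately show ?thesis by (simp add: cdelta_def)
qed

lemma cdelta_empty:
  assumes z: "\<forall>l<length xs. xs!l = []"
  shows "cdelta f xs = f []"
proof -
  have "CL xs = {[]}"
  proof
    show "CL xs \<subseteq> {[]}"
    proof
      fix cs assume cs: "cs \<in> CL xs"
      have "set cs = {}"
      proof (rule ccontr)
        assume "set cs \<noteq> {}"
        then obtain c where c: "c \<in> set cs" by (metis ex_in_conv)
        then have cp: "c < length xs" using cs by (auto simp: CL_def)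
        have "count_list cs c \<noteq> 0" using c by (simp add: count_list_0_iff)
        then have "xs!c \<noteq> []" using cs cp by (auto simp: CL_def)
        then show False using z cp by blast
      qed
      then show "cs \<in> {[]}" by simp
    qed
    show "{[]} \<subseteq> CL xs" using z by (auto simp: CL_def)
  qed
  then show ?thesis by (simp add: cdelta_def merge_def)
qed

lemma cdelta_homog:
  assumes "homog d f" "(\<Sum>k<length xs. length (xs!k)) \<noteq> d"
  shows "cdelta f xs = 0"
  unfolding cdelta_def
proof (rule sum.neutral, rule ballI)
  fix cs assume "cs \<in> CL xs"
  then have "length (merge cs xs) \<noteq> d" using CL_length[OF \<open>cs \<in> CL xs\<close>] assms(2) by simp
  then show "f (merge cs xs) = 0" using assms(1) homogD by blast
qed

lemma cdelta_diff: "cdelta (\<lambda>w. f w - g w) xs = cdelta f xs - cdelta g xs"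
  unfolding cdelta_def by (rule sum_subtractf)

definition prim :: "'k::comm_ring_1 fa \<Rightarrow> bool" where
  "prim P \<longleftrightarrow> P [] = 0 \<and> (\<forall>xs k l. k < length xs \<and> l < length xs \<and> k \<noteq> l \<and> xs!k \<noteq> [] \<and> xs!l \<noteq> []
      \<longrightarrow> cdelta P xs = 0)"

lemma primD: "prim P \<Longrightarrow> k < length xs \<Longrightarrow> l < length xs \<Longrightarrow> k \<noteq> l \<Longrightarrow> xs!k \<noteq> [] \<Longrightarrow> xs!l \<noteq> []
  \<Longrightarrow> cdelta P xs = 0"
  unfolding prim_def by blast

lemma primD0: "prim P \<Longrightarrow> P [] = 0"
  unfolding prim_def by blast

lemma two_nonempty_sum:
  assumes "k < length xs" "l < length xs" "k \<noteq> l" "xs!k \<noteq> []" "xs!l \<noteq> []"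
  shows "(\<Sum>m<length xs. length (xs!m)) \<ge> 2"
proof -
  have "(\<Sum>m\<in>{k,l}. length (xs!m)) \<le> (\<Sum>m<length xs. length (xs!m))"
    by (rule sum_mono2) (use assms in auto)
  moreover have "(\<Sum>m\<in>{k,l}. length (xs!m)) = length (xs!k) + length (xs!l)"
    using assms(3) by simp
  moreover have "length (xs!k) \<ge> 1" "length (xs!l) \<ge> 1" using assms(4,5) by (auto simp: Suc_le_eq)
  ultimately show ?thesis by linarith
qed

lemma prim_letter: "prim (letter a)"
  unfolding prim_def
proof (intro conjI allI impI)
  show "letter a [] = 0" by (simp add: letter_def)
  fix xs :: "nat list list" and k l
  assume "k < length xs \<and> l < length xs \<and> k \<noteq> l \<and> xs ! k \<noteq> [] \<and> xs ! l \<noteq> []"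
  then have "(\<Sum>m<length xs. length (xs!m)) \<ge> 2" using two_nonempty_sum by blast
  then show "cdelta (letter a) xs = 0" by (intro cdelta_homog[OF homog_letter]) simp
qed

lemma prim_zero_term:
  assumes pa: "prim a" and pb: "prim b" and ns: "ns \<in> NS xs"
    and m: "m < length xs" "0 < ns!m" "ns!m < length (xs!m)"
    and m': "m' < length xs" "m' \<noteq> m" "xs!m' \<noteq> []"
  shows "cdelta a (tk ns xs) * cdelta b (dr ns xs) = 0"
proof -
  have "xs!m \<noteq> []" using m(3) by auto
  then have t1: "tk ns xs ! m \<noteq> []" using m by simp
  have d1: "dr ns xs ! m \<noteq> []" using m by simp
  have "tk ns xs ! m' \<noteq> [] \<or> dr ns xs ! m' \<noteq> []"
  proof (rule ccontr)
    assume "\<not> ?thesis"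
    then have "take (ns!m') (xs!m') = []" "drop (ns!m') (xs!m') = []" using m' by auto
    then have "xs!m' = []" by (metis append_Nil append_take_drop_id)
    then show False using m' by simp
  qed
  then show ?thesis
  proof
    assume "tk ns xs ! m' \<noteq> []"
    then have "cdelta a (tk ns xs) = 0" using primD[OF pa, of m "tk ns xs" m'] t1 m m' by simp
    then show ?thesis by simp
  next
    assume "dr ns xs ! m' \<noteq> []"
    then have "cdelta b (dr ns xs) = 0" using primD[OF pb, of m "dr ns xs" m'] d1 m m' by simp
    then show ?thesis by simp
  qed
qed

lemma fmul_nil: "fmul a b [] = a [] * b []"
  by (simp add: fmul_def)

lemma fmul_cdelta_swap:
  assumes pa: "prim a" and pb: "prim b"
    and kl: "k < length xs" "l < length xs" "k \<noteq> l" "xs!k \<noteq> []" "xs!l \<noteq> []"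
  shows "cdelta (fmul a b) xs = cdelta (fmul b a) xs"
proof -
  define st where "st = (\<lambda>ns. map (\<lambda>m. length (xs!m) - ns!m) [0..<length xs])"
  have st_NS: "st ns \<in> NS xs" if "ns \<in> NS xs" for ns
    using that by (auto simp: st_def NS_def)
  have st_st: "st (st ns) = ns" if "ns \<in> NS xs" for ns
    using that by (intro nth_equalityI) (auto simp: st_def NS_def)
  have "cdelta (fmul a b) xs = (\<Sum>ns\<in>NS xs. cdelta a (tk ns xs) * cdelta b (dr ns xs))"
    by (rule fmul_cdelta)
  also have "\<dots> = (\<Sum>ns\<in>NS xs. cdelta a (tk (st ns) xs) * cdelta b (dr (st ns) xs))"
    by (rule sum.reindex_bij_witness[where i = st and j = st]) (auto simp: st_NS st_st)
  also have "\<dots> = (\<Sum>ns\<in>NS xs. cdelta b (tk ns xs) * cdelta a (dr ns xs))"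
  proof (rule sum.cong[OF refl])
    fix ns assume ns: "ns \<in> NS xs"
    show "cdelta a (tk (st ns) xs) * cdelta b (dr (st ns) xs) = cdelta b (tk ns xs) * cdelta a (dr ns xs)"
    proof (cases "\<exists>m<length xs. 0 < ns!m \<and> ns!m < length (xs!m)")
      case True
      then obtain m where m: "m < length xs" "0 < ns!m" "ns!m < length (xs!m)" by blast
      obtain m' where m': "m' < length xs" "m' \<noteq> m" "xs!m' \<noteq> []"
        using kl by (cases "k = m") auto
      have "cdelta b (tk ns xs) * cdelta a (dr ns xs) = 0"
        by (rule prim_zero_term[OF pb pa ns m m'])
      moreover have "cdelta a (tk (st ns) xs) * cdelta b (dr (st ns) xs) = 0"
        by (rule prim_zero_term[OF pa pb st_NS[OF ns] _ _ _ m']) (use m in \<open>auto simp: st_def\<close>)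
      ultimately show ?thesis by simp
    next
      case False
      then have F: "\<forall>m<length xs. ns!m = 0 \<or> ns!m = length (xs!m)"
        using ns by (force simp: NS_def)
      have "tk (st ns) xs = dr ns xs"
        by (rule nth_equalityI) (use F in \<open>auto simp: st_def\<close>)
      moreover have "dr (st ns) xs = tk ns xs"
        by (rule nth_equalityI) (use F in \<open>auto simp: st_def\<close>)
      ultimately show ?thesis by (simp add: mult.commute)
    qed
  qed
  also have "\<dots> = cdelta (fmul b a) xs"
    by (rule fmul_cdelta[symmetric])
  finally show ?thesis .
qed

lemma prim_comm: assumes "prim a" "prim b" shows "prim (comm a b)"
  unfolding prim_def
proof (intro conjI allI impI)
  show "comm a b [] = 0" using primD0[OF assms(1)] by (simp add: comm_def fmul_nil)
  fix xs :: "nat list list" and k l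
  assume "k < length xs \<and> l < length xs \<and> k \<noteq> l \<and> xs ! k \<noteq> [] \<and> xs ! l \<noteq> []"
  then have "cdelta (fmul a b) xs = cdelta (fmul b a) xs"
    using fmul_cdelta_swap[OF assms] by blast
  then show "cdelta (comm a b) xs = 0"
    unfolding comm_def by (simp add: cdelta_diff)
qed

lemma foldl_comm_props:
  assumes "prim a0" "homog d a0" "lsupp A a0" "set ss \<subseteq> A"
  shows "prim (foldl (\<lambda>acc x. comm acc (letter x)) a0 ss) \<and>
         homog (d + length ss) (foldl (\<lambda>acc x. comm acc (letter x)) a0 ss) \<and>
         lsupp A (foldl (\<lambda>acc x. comm acc (letter x)) a0 ss)"
  using assms
proof (induction ss arbitrary: a0 d)
  case Nil then show ?case by simp
next
  case (Cons s ss)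
  have sA: "s \<in> A" using Cons.prems(4) by simp
  have 1: "prim (comm a0 (letter s))" using prim_comm[OF Cons.prems(1) prim_letter] .
  have 2: "homog (d + 1) (comm a0 (letter s))" using homog_comm[OF Cons.prems(2) homog_letter] .
  have 3: "lsupp A (comm a0 (letter s))" using lsupp_comm[OF Cons.prems(3) lsupp_letter[OF sA]] .
  have 4: "set ss \<subseteq> A" using Cons.prems(4) by simp
  have "d + 1 + length ss = d + length (s # ss)" by simp
  then show ?case using Cons.IH[OF 1 2 3 4] by simp
qed

lemma Vset_props:
  assumes "finite S" "S \<noteq> {}"
  shows "prim (Vset S :: 'k::comm_ring_1 fa) \<and> homog (card S) (Vset S :: 'k fa) \<and> lsupp S (Vset S :: 'k fa)"
proof -
  obtain s ss where sl: "sorted_list_of_set S = s # ss"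
    using assms by (cases "sorted_list_of_set S") auto
  have set: "set (s # ss) = S" using set_sorted_list_of_set[OF assms(1)] unfolding sl .
  have "card S = length (s # ss)" using length_sorted_list_of_set[of S] unfolding sl by simp
  then have len: "card S = 1 + length ss" by simp
  have sS: "s \<in> S" "set ss \<subseteq> S" using set by auto
  have V: "Vset S = foldl (\<lambda>acc x. comm acc (letter x)) (letter s) ss"
    unfolding Vset_def sl by simp
  show ?thesis
    using foldl_comm_props[OF prim_letter homog_letter lsupp_letter[OF sS(1)] sS(2)]
    unfolding V len by simp
qed


definition FS :: "nat \<Rightarrow> nat \<Rightarrow> nat list set" where
  "FS q p = {fs. length fs = q \<and> set fs \<subseteq> {..<p}}"

definition GG :: "'k::comm_ring_1 fa list \<Rightarrow> nat list \<Rightarrow> nat \<Rightarrow> 'k fa" where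
  "GG Ps fs m = fprod (map fst (filter (\<lambda>x. snd x = m) (zip Ps fs)))"

lemma finite_FS: "finite (FS q p)"
  unfolding FS_def using finite_lists_length_eq[of "{..<p}" q] by (simp add: conj_commute)

lemma GG_Cons: "GG (P # Ps) (k # fs) m = (if k = m then fmul P (GG Ps fs m) else GG Ps fs m)"
  by (simp add: GG_def fprod_def)

lemma fprod_Cons: "fprod (P # Ps) = fmul P (fprod Ps)"
  by (simp add: fprod_def)

lemma fprod_Nil: "fprod [] = fone"
  by (simp add: fprod_def)

lemma fmul_prim1:
  assumes "P [] = 0"
  shows "fmul P G w = (\<Sum>i\<in>{1..length w}. P (take i w) * G (drop i w))"
  unfolding fmul_def
  by (rule sum.mono_neutral_right) (use assms in \<open>auto simp: Suc_le_eq\<close>)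

lemma cdelta_fone: "cdelta fone xs = (\<Prod>m<length xs. fone (xs!m))"
proof (cases "\<forall>l<length xs. xs!l = []")
  case True
  then show ?thesis by (simp add: cdelta_empty fone_def)
next
  case False
  then obtain m where m: "m < length xs" "xs!m \<noteq> []" by blast
  have "length (xs!m) \<le> (\<Sum>k<length xs. length (xs!k))"
    using m by (intro member_le_sum) auto
  then have "(\<Sum>k<length xs. length (xs!k)) \<noteq> 0" using m by auto
  then have "cdelta fone xs = 0" by (rule cdelta_homog[OF homog_fone])
  moreover have "(\<Prod>m<length xs. fone (xs!m)) = (0::'a)"
    using m by (intro prod_zero) (auto simp: fone_def intro!: bexI[of _ m])
  ultimately show ?thesis by simp
qed

definition emb :: "nat \<Rightarrow> nat \<Rightarrow> nat \<Rightarrow> nat list" where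
  "emb p k i = (replicate p 0)[k := i]"

lemma collapse:
  assumes pP: "prim P"
  shows "(\<Sum>ns\<in>NS xs. cdelta P (tk ns xs) * cdelta R (dr ns xs)) =
    (\<Sum>k<length xs. \<Sum>i\<in>{1..length (xs!k)}. P (take i (xs!k)) * cdelta R (xs[k := drop i (xs!k)]))"
proof -
  define p where "p = length xs"
  define Sg where "Sg = (SIGMA k:{..<p}. {1..length (xs!k)})"
  define e where "e = (\<lambda>(k, i). emb p k i)"
  define t where "t = (\<lambda>ns. cdelta P (tk ns xs) * cdelta R (dr ns xs))"
  have eNS: "e ` Sg \<subseteq> NS xs"
    by (auto simp: e_def Sg_def emb_def NS_def p_def nth_list_update)
  have zero: "t ns = 0" if ns: "ns \<in> NS xs - e ` Sg" for ns
  proof (cases "\<exists>k<p. tk ns xs ! k \<noteq> []")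
    case False
    then have "cdelta P (tk ns xs) = P []" by (intro cdelta_empty) (auto simp: p_def)
    then show ?thesis using primD0[OF pP] by (simp add: t_def)
  next
    case True
    then obtain k where k: "k < p" "tk ns xs ! k \<noteq> []" by blast
    show ?thesis
    proof (cases "\<exists>l<p. l \<noteq> k \<and> tk ns xs ! l \<noteq> []")
      case True
      then obtain l where l: "l < p" "l \<noteq> k" "tk ns xs ! l \<noteq> []" by blast
      have "cdelta P (tk ns xs) = 0" by (rule primD[OF pP, of k _ l]) (use k l in \<open>auto simp: p_def\<close>)
      then show ?thesis by (simp add: t_def)
    next
      case False
      have lns: "length ns = p" using ns by (simp add: NS_def p_def)
      have oth: "ns!l = 0" if "l < p" "l \<noteq> k" for l
      proof -
        have "take (ns!l) (xs!l) = []" using False that by (auto simp: p_def)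
        moreover have "ns!l \<le> length (xs!l)" using ns that by (auto simp: NS_def p_def)
        ultimately show ?thesis by auto
      qed
      have nk: "1 \<le> ns!k" "ns!k \<le> length (xs!k)"
        using k ns by (auto simp: NS_def p_def Suc_le_eq)
      have "ns = emb p k (ns!k)"
        by (rule nth_equalityI) (use lns oth k in \<open>auto simp: emb_def nth_list_update\<close>)
      then have "ns \<in> e ` Sg" using k nk unfolding e_def Sg_def by force
      then show ?thesis using ns by blast
    qed
  qed
  have inj: "inj_on e Sg"
  proof (rule inj_onI)
    fix a b assume a: "a \<in> Sg" and b: "b \<in> Sg" and eq: "e a = e b"
    obtain k i where ai: "a = (k, i)" by (cases a)
    obtain k' i' where bi: "b = (k', i')" by (cases b)
    have ki: "k < p" "1 \<le> i" "k' < p" "1 \<le> i'" using a b by (auto simp: ai bi Sg_def)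
    have eq': "emb p k i = emb p k' i'" using eq by (simp add: e_def ai bi)
    have "emb p k i ! k = i" using ki by (simp add: emb_def)
    then have "emb p k' i' ! k \<noteq> 0" using eq' ki by simp
    then have "k = k'" using ki by (auto simp: emb_def nth_list_update split: if_splits)
    moreover have "i = i'" using eq' \<open>emb p k i ! k = i\<close> \<open>k = k'\<close> ki by (simp add: emb_def)
    ultimately show "a = b" by (simp add: ai bi)
  qed
  have "(\<Sum>ns\<in>NS xs. t ns) = (\<Sum>ns\<in>e ` Sg. t ns)"
    by (rule sum.mono_neutral_right[OF finite_NS eNS]) (use zero in blast)
  also have "\<dots> = (\<Sum>a\<in>Sg. t (e a))"
    by (simp add: sum.reindex[OF inj] comp_def)
  also have "\<dots> = (\<Sum>a\<in>Sg. P (take (snd a) (xs!(fst a))) * cdelta R (xs[fst a := drop (snd a) (xs!(fst a))]))"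
  proof (rule sum.cong[OF refl])
    fix a assume a: "a \<in> Sg"
    obtain k i where ai: "a = (k, i)" by (cases a)
    have k: "k < p" using a by (auto simp: Sg_def ai)
    have tk: "tk (emb p k i) xs ! k = take i (xs!k)" using k by (simp add: emb_def p_def)
    have "cdelta P (tk (emb p k i) xs) = P (tk (emb p k i) xs ! k)"
      by (rule cdelta_single) (use k in \<open>auto simp: emb_def p_def nth_list_update\<close>)
    moreover have "dr (emb p k i) xs = xs[k := drop i (xs!k)]"
      by (rule nth_equalityI) (use k in \<open>auto simp: emb_def p_def nth_list_update\<close>)
    ultimately show "t (e a) = P (take (snd a) (xs!(fst a))) * cdelta R (xs[fst a := drop (snd a) (xs!(fst a))])"
      by (simp add: t_def e_def ai tk)
  qed
  also have "\<dots> = (\<Sum>k<p. \<Sum>i\<in>{1..length (xs!k)}. P (take i (xs!k)) * cdelta R (xs[k := drop i (xs!k)]))"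
    unfolding Sg_def
    using sum.Sigma[of "{..<p}" "\<lambda>k. {1..length (xs!k)}" "\<lambda>k i. P (take i (xs!k)) * cdelta R (xs[k := drop i (xs!k)])"]
    by (simp add: split_def)
  finally show ?thesis by (simp add: t_def p_def)
qed


lemma sum_FS_Suc:
  "(\<Sum>fs\<in>FS (Suc q) p. H fs) = (\<Sum>k<p. \<Sum>fs\<in>FS q p. H (k # fs))"
proof -
  have "(\<Sum>k<p. \<Sum>fs\<in>FS q p. H (k # fs)) = (\<Sum>z\<in>{..<p} \<times> FS q p. H (fst z # snd z))"
    using sum.cartesian_product[of "\<lambda>k fs. H (k # fs)" "FS q p" "{..<p}"] by (simp add: split_def)
  also have "\<dots> = (\<Sum>fs\<in>FS (Suc q) p. H fs)"
    by (rule sum.reindex_bij_witness[where i = "\<lambda>fs. (hd fs, tl fs)" and j = "\<lambda>z. fst z # snd z"])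
       (auto simp: FS_def length_Suc_conv)
  finally show ?thesis by simp
qed

theorem cdelta_fprod:
  assumes "\<forall>P\<in>set Ps. prim P"
  shows "cdelta (fprod Ps) xs = (\<Sum>fs\<in>FS (length Ps) (length xs). \<Prod>m<length xs. GG Ps fs m (xs!m))"
  using assms
proof (induction Ps arbitrary: xs)
  case Nil
  have "FS 0 (length xs) = {[]}" by (auto simp: FS_def)
  then show ?case by (simp add: fprod_Nil cdelta_fone GG_def)
next
  case (Cons P Ps)
  define p where "p = length xs"
  define q where "q = length Ps"
  have pP: "prim P" using Cons.prems by simp
  have P0: "P [] = 0" using primD0[OF pP] .
  define Rest where "Rest = (\<lambda>k fs. \<Prod>m\<in>{..<p} - {k}. GG Ps fs m (xs!m))"
  have "cdelta (fprod (P # Ps)) xs = (\<Sum>k<p. \<Sum>i\<in>{1..length (xs!k)}. P (take i (xs!k)) * cdelta (fprod Ps) (xs[k := drop i (xs!k)]))"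
    unfolding fprod_Cons fmul_cdelta collapse[OF pP] p_def ..
  also have "\<dots> = (\<Sum>k<p. \<Sum>i\<in>{1..length (xs!k)}. \<Sum>fs\<in>FS q p. P (take i (xs!k)) * (GG Ps fs k (drop i (xs!k)) * Rest k fs))"
  proof (intro sum.cong refl)
    fix k i assume k: "k \<in> {..<p}"
    have "cdelta (fprod Ps) (xs[k := drop i (xs!k)]) = (\<Sum>fs\<in>FS q p. \<Prod>m<p. GG Ps fs m ((xs[k := drop i (xs!k)])!m))"
      using Cons.IH[of "xs[k := drop i (xs!k)]"] Cons.prems by (simp add: p_def q_def)
    also have "\<dots> = (\<Sum>fs\<in>FS q p. GG Ps fs k (drop i (xs!k)) * Rest k fs)"
    proof (rule sum.cong[OF refl])
      fix fs
      have "(\<Prod>m<p. GG Ps fs m ((xs[k := drop i (xs!k)])!m)) =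
            GG Ps fs k ((xs[k := drop i (xs!k)])!k) * (\<Prod>m\<in>{..<p} - {k}. GG Ps fs m ((xs[k := drop i (xs!k)])!m))"
        using k by (intro prod.remove) auto
      also have "(\<Prod>m\<in>{..<p} - {k}. GG Ps fs m ((xs[k := drop i (xs!k)])!m)) = Rest k fs"
        unfolding Rest_def by (intro prod.cong) auto
      finally show "(\<Prod>m<p. GG Ps fs m ((xs[k := drop i (xs!k)])!m)) = GG Ps fs k (drop i (xs!k)) * Rest k fs"
        using k by (simp add: p_def)
    qed
    finally show "P (take i (xs!k)) * cdelta (fprod Ps) (xs[k := drop i (xs!k)]) =
      (\<Sum>fs\<in>FS q p. P (take i (xs!k)) * (GG Ps fs k (drop i (xs!k)) * Rest k fs))"
      by (simp add: sum_distrib_left)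
  qed
  also have "\<dots> = (\<Sum>k<p. \<Sum>fs\<in>FS q p. (\<Sum>i\<in>{1..length (xs!k)}. P (take i (xs!k)) * GG Ps fs k (drop i (xs!k))) * Rest k fs)"
  proof (rule sum.cong[OF refl])
    fix k
    show "(\<Sum>i\<in>{1..length (xs!k)}. \<Sum>fs\<in>FS q p. P (take i (xs!k)) * (GG Ps fs k (drop i (xs!k)) * Rest k fs)) =
      (\<Sum>fs\<in>FS q p. (\<Sum>i\<in>{1..length (xs!k)}. P (take i (xs!k)) * GG Ps fs k (drop i (xs!k))) * Rest k fs)"
      by (subst sum.swap) (simp add: sum_distrib_right mult.assoc)
  qed
  also have "\<dots> = (\<Sum>k<p. \<Sum>fs\<in>FS q p. \<Prod>m<p. GG (P # Ps) (k # fs) m (xs!m))"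
  proof (intro sum.cong refl)
    fix k fs assume k: "k \<in> {..<p}"
    have "(\<Prod>m<p. GG (P # Ps) (k # fs) m (xs!m)) =
          GG (P # Ps) (k # fs) k (xs!k) * (\<Prod>m\<in>{..<p} - {k}. GG (P # Ps) (k # fs) m (xs!m))"
      using k by (intro prod.remove) auto
    also have "(\<Prod>m\<in>{..<p} - {k}. GG (P # Ps) (k # fs) m (xs!m)) = Rest k fs"
      unfolding Rest_def by (intro prod.cong) (auto simp: GG_Cons)
    also have "GG (P # Ps) (k # fs) k (xs!k) = (\<Sum>i\<in>{1..length (xs!k)}. P (take i (xs!k)) * GG Ps fs k (drop i (xs!k)))"
      by (simp add: GG_Cons fmul_prim1[of P, OF P0])
    finally show "(\<Sum>i\<in>{1..length (xs!k)}. P (take i (xs!k)) * GG Ps fs k (drop i (xs!k))) * Rest k fs =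
       (\<Prod>m<p. GG (P # Ps) (k # fs) m (xs!m))" by simp
  qed
  also have "\<dots> = (\<Sum>fs\<in>FS (Suc q) p. \<Prod>m<p. GG (P # Ps) fs m (xs!m))"
    by (rule sum_FS_Suc[symmetric])
  finally show ?case by (simp add: p_def q_def)
qed


lemma filter_upt_eq_single:
  assumes "a < p" shows "filter (\<lambda>j. j = a) [0..<p] = [a]"
proof -
  have "[0..<p] = [0..<a] @ a # [Suc a..<p]"
    using assms by (metis le_add1 less_imp_add_positive upt_add_eq_append upt_conv_Cons add_0 order.strict_implies_order)
  then show ?thesis by (simp add: filter_empty_conv)
qed

lemma GG_perm:
  assumes tau: "tau permutes {..<p}" and len: "length Ps = p" and m: "m < p"
  shows "GG Ps (map tau [0..<p]) m = Ps ! (inv tau m)"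
proof -
  have im: "inv tau m < p" using permutes_in_image[OF permutes_inv[OF tau]] m by simp
  have z: "zip Ps (map tau [0..<p]) = map (\<lambda>j. (Ps!j, tau j)) [0..<p]"
    by (rule nth_equalityI) (use len in auto)
  have "filter (\<lambda>x. snd x = m) (zip Ps (map tau [0..<p])) = map (\<lambda>j. (Ps!j, tau j)) (filter (\<lambda>j. tau j = m) [0..<p])"
    unfolding z by (simp add: filter_map comp_def)
  also have "filter (\<lambda>j. tau j = m) [0..<p] = filter (\<lambda>j. j = inv tau m) [0..<p]"
    by (rule filter_cong[OF refl]) (metis permutes_inv_eq[OF tau])
  also have "\<dots> = [inv tau m]" by (rule filter_upt_eq_single[OF im])
  finally show ?thesis by (simp add: GG_def fprod_def fmul_fone_right)
qed

lemma cdelta_fprod_perm: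
  assumes prim: "\<forall>P\<in>set Ps. prim P" and len: "length Ps = length xs"
    and ne: "\<forall>m<length xs. xs!m \<noteq> []"
  shows "cdelta (fprod Ps) xs = (\<Sum>tau | tau permutes {..<length xs}. \<Prod>m<length xs. (Ps ! (tau m)) (xs!m))"
proof -
  define p where "p = length xs"
  define T where "T = (\<lambda>fs. \<Prod>m<p. GG Ps fs m (xs!m))"
  have "cdelta (fprod Ps) xs = (\<Sum>fs\<in>FS p p. T fs)"
    using cdelta_fprod[OF prim] len by (simp add: p_def T_def)
  also have "\<dots> = (\<Sum>fs\<in>{fs\<in>FS p p. set fs = {..<p}}. T fs)"
  proof (rule sum.mono_neutral_right[OF finite_FS])
    show "{fs \<in> FS p p. set fs = {..<p}} \<subseteq> FS p p" by blast
    show "\<forall>fs\<in>FS p p - {fs \<in> FS p p. set fs = {..<p}}. T fs = 0"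
    proof
      fix fs assume fs: "fs \<in> FS p p - {fs \<in> FS p p. set fs = {..<p}}"
      then obtain m where m: "m < p" "m \<notin> set fs" by (auto simp: FS_def)
      have "filter (\<lambda>x. snd x = m) (zip Ps fs) = []"
        using m(2) by (auto simp: filter_empty_conv dest: set_zip_rightD)
      then have "GG Ps fs m = fone" by (simp add: GG_def fprod_def)
      then have "GG Ps fs m (xs!m) = 0" using ne m by (simp add: fone_def p_def)
      then show "T fs = 0" unfolding T_def using m by (intro prod_zero) auto
    qed
  qed
  also have "\<dots> = (\<Sum>tau | tau permutes {..<p}. T (map tau [0..<p]))"
  proof (rule sum.reindex_bij_witness[where j = "\<lambda>fs m. if m < p then fs!m else m" and i = "\<lambda>tau. map tau [0..<p]"])
    fix fs assume fs: "fs \<in> {fs\<in>FS p p. set fs = {..<p}}"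
    then have lfs: "length fs = p" and sfs: "set fs = {..<p}" by (auto simp: FS_def)
    show "map (\<lambda>m. if m < p then fs!m else m) [0..<p] = fs"
      by (rule nth_equalityI) (use lfs in auto)
    have dist: "distinct fs" using lfs sfs by (intro card_distinct) simp
    have "bij_betw (\<lambda>m. if m < p then fs!m else m) {..<p} {..<p}"
    proof (rule bij_betw_imageI)
      show "inj_on (\<lambda>m. if m < p then fs!m else m) {..<p}"
        using dist lfs by (auto simp: inj_on_def nth_eq_iff_index_eq)
      show "(\<lambda>m. if m < p then fs!m else m) ` {..<p} = {..<p}"
        using lfs sfs by (auto simp: set_conv_nth image_def)
    qed
    then show "(\<lambda>m. if m < p then fs!m else m) \<in> {tau. tau permutes {..<p}}"
      by (auto intro!: bij_imp_permutes split: if_splits)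
  next
    fix tau assume "tau \<in> {tau. tau permutes {..<p}}"
    then have tau: "tau permutes {..<p}" by simp
    show "(\<lambda>m. if m < p then map tau [0..<p] ! m else m) = tau"
      using permutes_not_in[OF tau] by (auto simp: fun_eq_iff)
    have "set (map tau [0..<p]) = {..<p}"
      using permutes_image[OF tau] by (simp add: lessThan_atLeast0)
    then show "map tau [0..<p] \<in> {fs \<in> FS p p. set fs = {..<p}}"
      by (simp add: FS_def)
  next
    fix fs assume fs: "fs \<in> {fs\<in>FS p p. set fs = {..<p}}"
    then have lfs: "length fs = p" by (auto simp: FS_def)
    have "map (\<lambda>m. if m < p then fs!m else m) [0..<p] = fs"
      by (rule nth_equalityI) (use lfs in auto)
    then show "T (map (\<lambda>m. if m < p then fs!m else m) [0..<p]) = T fs" by simp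
  qed
  also have "\<dots> = (\<Sum>tau | tau permutes {..<p}. \<Prod>m<p. (Ps ! (inv tau m)) (xs!m))"
    unfolding T_def by (intro sum.cong refl prod.cong) (use len in \<open>auto simp: GG_perm p_def\<close>)
  also have "\<dots> = (\<Sum>tau | tau permutes {..<p}. \<Prod>m<p. (Ps ! (inv (inv tau) m)) (xs!m))"
    by (rule sum_permutations_inverse)
  also have "\<dots> = (\<Sum>tau | tau permutes {..<p}. \<Prod>m<p. (Ps ! (tau m)) (xs!m))"
    by (intro sum.cong refl) (auto simp: permutes_inv_inv)
  finally show ?thesis by (simp add: p_def)
qed


fun blk :: "nat list \<Rightarrow> nat \<Rightarrow> nat" where
  "blk [] x = 0"
| "blk (g # gs) x = (if x \<le> g then 0 else Suc (blk gs (x - g)))"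

definition off :: "nat list \<Rightarrow> nat \<Rightarrow> nat" where
  "off gs c = sum_list (take c gs)"

fun chunks :: "nat list \<Rightarrow> 'a list \<Rightarrow> 'a list list" where
  "chunks [] w = []"
| "chunks (g # gs) w = take g w # chunks gs (drop g w)"

lemma off_0[simp]: "off gs 0 = 0" by (simp add: off_def)
lemma off_Cons_Suc[simp]: "off (g # gs) (Suc c) = g + off gs c" by (simp add: off_def)

lemma off_Suc: "c < length gs \<Longrightarrow> off gs (Suc c) = off gs c + gs!c"
  by (simp add: off_def take_Suc_conv_app_nth)

lemma off_length: "off gs (length gs) = sum_list gs" by (simp add: off_def)

lemma off_mono: "c \<le> c' \<Longrightarrow> off gs c \<le> off gs c'"
proof (induction gs arbitrary: c c')
  case Nil then show ?case by (simp add: off_def)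
next
  case (Cons g gs)
  then show ?case by (cases c; cases c') auto
qed

lemma off_le_sum: "off gs c \<le> sum_list gs"
  by (metis off_def append_take_drop_id le_add1 sum_list_append)

lemma blk_props:
  assumes "1 \<le> x" "x \<le> sum_list gs"
  shows "blk gs x < length gs \<and> off gs (blk gs x) < x \<and> x \<le> off gs (blk gs x) + gs ! (blk gs x)"
  using assms
proof (induction gs arbitrary: x)
  case Nil then show ?case by simp
next
  case (Cons g gs)
  show ?case
  proof (cases "x \<le> g")
    case True then show ?thesis using Cons.prems by simp
  next
    case False
    then have "1 \<le> x - g" "x - g \<le> sum_list gs" using Cons.prems by auto
    from Cons.IH[OF this] False show ?thesis by auto
  qed
qed

lemma blk_eq:
  assumes "c < length gs" "off gs c < x" "x \<le> off gs c + gs ! c"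
  shows "blk gs x = c"
  using assms
proof (induction gs arbitrary: c x)
  case Nil then show ?case by simp
next
  case (Cons g gs)
  show ?case
  proof (cases c)
    case 0 then show ?thesis using Cons.prems by simp
  next
    case (Suc c')
    then have "g < x" using Cons.prems by simp
    moreover have "blk gs (x - g) = c'"
      using Cons.prems Suc by (intro Cons.IH) auto
    ultimately show ?thesis using Suc by simp
  qed
qed

lemma blk_mono: "x \<le> y \<Longrightarrow> blk gs x \<le> blk gs y"
proof (induction gs arbitrary: x y)
  case Nil then show ?case by simp
next
  case (Cons g gs)
  then show ?case by (auto simp: Cons.IH)
qed

lemma length_chunks[simp]: "length (chunks gs w) = length gs"
  by (induction gs arbitrary: w) auto

lemma nth_chunks: "c < length gs \<Longrightarrow> chunks gs w ! c = take (gs!c) (drop (off gs c) w)"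
proof (induction gs arbitrary: w c)
  case Nil then show ?case by simp
next
  case (Cons g gs)
  then show ?case by (cases c) (auto simp: add.commute)
qed

lemma length_nth_chunks:
  assumes "c < length gs" "length w = sum_list gs"
  shows "length (chunks gs w ! c) = gs ! c"
proof -
  have "off gs c + gs!c \<le> sum_list gs"
    using off_Suc[OF assms(1)] off_le_sum[of gs "Suc c"] by simp
  then show ?thesis using assms by (simp add: nth_chunks)
qed

lemma nth_nth_chunks:
  assumes "c < length gs" "length w = sum_list gs" "r < gs ! c"
  shows "chunks gs w ! c ! r = w ! (off gs c + r)"
proof -
  have "off gs c + gs!c \<le> sum_list gs"
    using off_Suc[OF assms(1)] off_le_sum[of gs "Suc c"] by simp
  then show ?thesis using assms by (simp add: nth_chunks)
qed

lemma off_strict_mono: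
  assumes "\<forall>a\<in>set gs. 0 < a" "c < c'" "c' \<le> length gs"
  shows "off gs c < off gs c'"
proof -
  have "c < length gs" using assms by simp
  then have "off gs (Suc c) = off gs c + gs!c" by (rule off_Suc)
  moreover have "gs!c > 0" using assms \<open>c < length gs\<close> by auto
  moreover have "off gs (Suc c) \<le> off gs c'" using assms by (intro off_mono) simp
  ultimately show ?thesis by simp
qed

lemma SetC_blk:
  assumes pos: "\<forall>a\<in>set gs. 0 < a" and i: "1 \<le> i" "i < sum_list gs"
  shows "i \<in> SetC gs \<longleftrightarrow> blk gs i \<noteq> blk gs (Suc i)"
proof
  assume "i \<in> SetC gs"
  then obtain c where c: "i = off gs c" "1 \<le> c" "c \<le> length gs - 1"
    by (auto simp: SetC_def off_def)
  have cl: "c < length gs" using c i by (cases "length gs") auto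
  have "blk gs i = c - 1"
  proof (rule blk_eq)
    show "c - 1 < length gs" using cl by simp
    have "off gs (Suc (c - 1)) = off gs (c - 1) + gs!(c-1)" using cl by (intro off_Suc) simp
    then have "off gs c = off gs (c - 1) + gs!(c-1)" using c by simp
    moreover have "gs!(c-1) > 0" using pos cl by simp
    ultimately show "off gs (c - 1) < i" "i \<le> off gs (c - 1) + gs ! (c - 1)" using c by auto
  qed
  moreover have "blk gs (Suc i) = c"
  proof (rule blk_eq[OF cl])
    show "off gs c < Suc i" using c by simp
    have "gs!c > 0" using pos cl by simp
    then show "Suc i \<le> off gs c + gs ! c" using c by simp
  qed
  ultimately show "blk gs i \<noteq> blk gs (Suc i)" using c by simp
next
  assume ne: "blk gs i \<noteq> blk gs (Suc i)"
  define c where "c = blk gs i"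
  have P: "c < length gs" "off gs c < i" "i \<le> off gs c + gs ! c"
    using blk_props[of i gs] i by (auto simp: c_def)
  have eqi: "i = off gs c + gs!c"
  proof (rule ccontr)
    assume "i \<noteq> off gs c + gs!c"
    then have "blk gs (Suc i) = c" using P by (intro blk_eq) auto
    then show False using ne c_def by simp
  qed
  then have eqi': "i = off gs (Suc c)" using off_Suc[OF P(1)] by simp
  have "Suc c \<noteq> length gs" using eqi' i off_length[of gs] by auto
  then have "Suc c \<le> length gs - 1" using P by simp
  then show "i \<in> SetC gs" using eqi' unfolding SetC_def off_def by force
qed


definition Qm :: "nat list \<Rightarrow> nat \<Rightarrow> (nat \<Rightarrow> nat) set" where
  "Qm gs n = {v. v permutes {1..n} \<and>
     (\<forall>x y. 1 \<le> x \<longrightarrow> x < y \<longrightarrow> y \<le> n \<longrightarrow> blk gs (v x) = blk gs (v y) \<longrightarrow> v x < v y)}"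

lemma des_local:
  assumes pos: "\<forall>a\<in>set gs. 0 < a" and n: "n = sum_list gs"
    and u: "u permutes {1..n}" and D: "Des n u \<subseteq> SetC gs"
    and i: "1 \<le> i" "i < n" and b: "blk gs i = blk gs (Suc i)"
  shows "u i < u (Suc i)"
proof -
  have isum: "i < sum_list gs" using i(2) n by simp
  have "i \<notin> SetC gs" using SetC_blk[OF pos i(1) isum] b by simp
  then have "i \<notin> Des n u" using D by blast
  moreover have "i \<in> {1..n-1}" using i by simp
  ultimately have "\<not> u i > u (i + 1)" unfolding Des_def by blast
  moreover have "u i \<noteq> u (Suc i)" using inj_eq[OF permutes_inj[OF u], of i "Suc i"] by simp
  ultimately show ?thesis by simp
qed

lemma des_global:
  assumes pos: "\<forall>a\<in>set gs. 0 < a" and n: "n = sum_list gs"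
    and u: "u permutes {1..n}" and D: "Des n u \<subseteq> SetC gs"
    and ab: "1 \<le> a" "a < b" "b \<le> n" "blk gs a = blk gs b"
  shows "u a < u b"
proof -
  have main: "a + Suc d \<le> n \<Longrightarrow> blk gs a = blk gs (a + Suc d) \<Longrightarrow> u a < u (a + Suc d)" for d
  proof (induction d)
    case 0
    then have "a < n" by simp
    then show ?case using des_local[OF pos n u D ab(1)] 0 by simp
  next
    case (Suc d)
    define c where "c = a + Suc d"
    have sc: "Suc c = a + Suc (Suc d)" by (simp add: c_def)
    have ac: "a \<le> c" "c \<le> a + Suc (Suc d)" by (simp_all add: c_def)
    have m1: "blk gs a \<le> blk gs c" using ac(1) by (rule blk_mono)
    have m2: "blk gs c \<le> blk gs (a + Suc (Suc d))" using ac(2) by (rule blk_mono)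
    have bc: "blk gs a = blk gs c" using m1 m2 Suc.prems(2) by simp
    have bc2: "blk gs c = blk gs (Suc c)" using bc Suc.prems(2) sc by simp
    have cn: "c < n" using Suc.prems(1) sc by simp
    have "u a < u c" using Suc.IH cn bc by (simp add: c_def)
    also have "u c < u (Suc c)"
      using des_local[OF pos n u D _ cn bc2] ab(1) by (simp add: c_def)
    finally show ?case using sc by simp
  qed
  define d where "d = b - a - 1"
  have d: "b = a + Suc d" using ab(2) by (simp add: d_def)
  show ?thesis using main[of d] d ab by simp
qed

lemma inv_in_Qm:
  assumes pos: "\<forall>a\<in>set gs. 0 < a" and n: "n = sum_list gs"
    and u: "u permutes {1..n}" and D: "Des n u \<subseteq> SetC gs"
  shows "inv u \<in> Qm gs n"
  unfolding Qm_def
proof (intro CollectI conjI allI impI)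
  show "inv u permutes {1..n}" using permutes_inv[OF u] .
  fix x y assume xy: "1 \<le> x" "x < y" "y \<le> n" "blk gs (inv u x) = blk gs (inv u y)"
  have "x \<in> {1..n}" "y \<in> {1..n}" using xy by simp_all
  then have ix: "inv u x \<in> {1..n}" "inv u y \<in> {1..n}"
    by (simp_all only: permutes_in_image[OF permutes_inv[OF u]])
  have ne: "inv u x \<noteq> inv u y" using inj_eq[OF permutes_inj[OF permutes_inv[OF u]]] xy by simp
  show "inv u x < inv u y"
  proof (rule ccontr)
    assume "\<not> inv u x < inv u y"
    then have "inv u y < inv u x" using ne by simp
    then have "u (inv u y) < u (inv u x)"
      using des_global[OF pos n u D, of "inv u y" "inv u x"] ix xy by auto
    then have "y < x" by (simp add: permutes_inverses(1)[OF u])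
    then show False using xy by simp
  qed
qed

lemma inv_in_Pdes:
  assumes pos: "\<forall>a\<in>set gs. 0 < a" and n: "n = sum_list gs" and v: "v \<in> Qm gs n"
  shows "inv v permutes {1..n} \<and> Des n (inv v) \<subseteq> SetC gs"
proof
  have vp: "v permutes {1..n}" using v by (simp add: Qm_def)
  show "inv v permutes {1..n}" using permutes_inv[OF vp] .
  show "Des n (inv v) \<subseteq> SetC gs"
  proof
    fix i assume "i \<in> Des n (inv v)"
    then have i: "1 \<le> i" "i < n" "inv v i > inv v (i + 1)" by (auto simp: Des_def)
    show "i \<in> SetC gs"
    proof (rule ccontr)
      assume "i \<notin> SetC gs"
      then have b: "blk gs i = blk gs (Suc i)" using SetC_blk[OF pos i(1)] i n by simp
      define x where "x = inv v (Suc i)"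
      define y where "y = inv v i"
      have "Suc i \<in> {1..n}" "i \<in> {1..n}" using i by simp_all
      then have xy: "x \<in> {1..n}" "y \<in> {1..n}" unfolding x_def y_def
        by (simp_all only: permutes_in_image[OF permutes_inv[OF vp]])
      have vx: "v x = Suc i" "v y = i" by (auto simp: x_def y_def permutes_inverses(1)[OF vp])
      have xly: "x < y" using i by (simp add: x_def y_def)
      have Q: "\<forall>x y. 1 \<le> x \<longrightarrow> x < y \<longrightarrow> y \<le> n \<longrightarrow> blk gs (v x) = blk gs (v y) \<longrightarrow> v x < v y"
        using v by (simp add: Qm_def)
      have "blk gs (v x) = blk gs (v y)" using vx b by simp
      then have "v x < v y" using Q xy xly by auto
      then show False using vx by simp
    qed
  qed
qed

lemma sum_Pdes_Qm:
  assumes pos: "\<forall>a\<in>set gs. 0 < a" and n: "n = sum_list gs"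
  shows "(\<Sum>u\<in>{u. u permutes {1..n} \<and> Des n u \<subseteq> SetC gs}. F (inv u)) = (\<Sum>v\<in>Qm gs n. F v)"
proof (rule sum.reindex_bij_witness[where i = inv and j = inv])
  fix u assume "u \<in> {u. u permutes {1..n} \<and> Des n u \<subseteq> SetC gs}"
  then have u: "u permutes {1..n}" "Des n u \<subseteq> SetC gs" by auto
  show "inv (inv u) = u" using permutes_inv_inv[OF u(1)] .
  show "inv u \<in> Qm gs n" using inv_in_Qm[OF pos n u] .
next
  fix v assume v: "v \<in> Qm gs n"
  have vp: "v permutes {1..n}" using v by (simp add: Qm_def)
  show "inv (inv v) = v" using permutes_inv_inv[OF vp] .
  show "inv v \<in> {u. u permutes {1..n} \<and> Des n u \<subseteq> SetC gs}" using inv_in_Pdes[OF pos n v] by simp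
qed simp


definition csv :: "nat list \<Rightarrow> nat \<Rightarrow> (nat \<Rightarrow> nat) \<Rightarrow> nat list" where
  "csv gs n v = map (\<lambda>j. blk gs (v (Suc j))) [0..<n]"

definition vcs :: "nat list \<Rightarrow> nat \<Rightarrow> nat list \<Rightarrow> nat \<Rightarrow> nat" where
  "vcs gs n cs = (\<lambda>x. if 1 \<le> x \<and> x \<le> n then off gs (cs!(x-1)) + count_list (take (x-1) cs) (cs!(x-1)) + 1 else x)"

lemma perm_range:
  assumes "v permutes {1..n}" "1 \<le> x" "x \<le> n"
  shows "1 \<le> v x \<and> v x \<le> n"
proof -
  have "x \<in> {1..n}" using assms by simp
  then have "v x \<in> {1..n}" by (simp only: permutes_in_image[OF assms(1)])
  then show ?thesis by simp
qed

lemma count_as_card: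
  "count_list xs c = card {i. i < length xs \<and> xs!i = c}"
  unfolding count_list_eq_length_filter length_filter_conv_card by metis

lemma key_count:
  assumes n: "n = sum_list gs" and v: "v \<in> Qm gs n" and x: "1 \<le> x" "x \<le> n"
  shows "v x = off gs (blk gs (v x)) + count_list (take (x-1) (csv gs n v)) (blk gs (v x)) + 1"
proof -
  have vp: "v permutes {1..n}" using v by (simp add: Qm_def)
  have Q: "\<And>x y. 1 \<le> x \<Longrightarrow> x < y \<Longrightarrow> y \<le> n \<Longrightarrow> blk gs (v x) = blk gs (v y) \<Longrightarrow> v x < v y"
    using v by (simp add: Qm_def)
  define c where "c = blk gs (v x)"
  have vx: "1 \<le> v x" "v x \<le> n" using perm_range[OF vp x] by auto
  have P: "c < length gs" "off gs c < v x" "v x \<le> off gs c + gs ! c"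
    using blk_props[of "v x" gs] vx n by (auto simp: c_def)
  define A where "A = {y. 1 \<le> y \<and> y < x \<and> blk gs (v y) = c}"
  define I where "I = {i. i < x - 1 \<and> blk gs (v (Suc i)) = c}"
  have AI: "A = Suc ` I"
  proof
    show "A \<subseteq> Suc ` I"
    proof
      fix y assume y: "y \<in> A"
      then have "y = Suc (y - 1)" "y - 1 \<in> I" by (auto simp: A_def I_def)
      then show "y \<in> Suc ` I" by (metis imageI)
    qed
    show "Suc ` I \<subseteq> A" by (auto simp: A_def I_def)
  qed
  have cnt: "count_list (take (x-1) (csv gs n v)) c = card I"
  proof -
    have "{i. i < length (take (x-1) (csv gs n v)) \<and> take (x-1) (csv gs n v) ! i = c} = I"
      using x by (auto simp: I_def csv_def)
    then show ?thesis by (simp add: count_as_card)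
  qed
  have cA: "card A = card I" unfolding AI by (rule card_image) simp
  have img: "v ` A = {off gs c + 1..<v x}"
  proof
    show "v ` A \<subseteq> {off gs c + 1..<v x}"
    proof
      fix z assume "z \<in> v ` A"
      then obtain y where y: "y \<in> A" "z = v y" by blast
      have y1: "1 \<le> y" "y < x" "blk gs (v y) = c" using y by (auto simp: A_def)
      have vy: "1 \<le> v y" "v y \<le> n" using perm_range[OF vp y1(1)] y1 x by auto
      have "off gs (blk gs (v y)) < v y" using blk_props[of "v y" gs] vy n by auto
      then have "off gs c < v y" using y1 by simp
      moreover have "v y < v x" using Q[OF y1(1) y1(2) x(2)] y1(3) c_def by simp
      ultimately show "z \<in> {off gs c + 1..<v x}" using y by simp
    qed
    show "{off gs c + 1..<v x} \<subseteq> v ` A"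
    proof
      fix z assume z: "z \<in> {off gs c + 1..<v x}"
      have z1: "1 \<le> z" "z \<le> n" using z vx by auto
      have bz: "blk gs z = c" using z P by (intro blk_eq) auto
      define y where "y = inv v z"
      have vy: "v y = z" by (simp add: y_def permutes_inverses(1)[OF vp])
      have "z \<in> {1..n}" using z1 by simp
      then have "y \<in> {1..n}" unfolding y_def by (simp only: permutes_in_image[OF permutes_inv[OF vp]])
      then have y1: "1 \<le> y" "y \<le> n" by auto
      have "y \<noteq> x" using vy z by auto
      moreover have "\<not> x < y"
      proof
        assume "x < y"
        then have "v x < v y" using Q[OF x(1) _ y1(2)] bz vy c_def by simp
        then show False using vy z by simp
      qed
      ultimately have "y < x" by simp
      then have "y \<in> A" using y1 bz vy by (simp add: A_def)
      then show "z \<in> v ` A" using vy by (metis imageI)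
    qed
  qed
  have "card (v ` A) = card A"
    by (rule card_image[OF permutes_inj_on[OF vp]])
  then have "card A = v x - (off gs c + 1)" using img by simp
  then show ?thesis using cnt cA P by (simp add: c_def)
qed

lemma csv_CL:
  assumes n: "n = sum_list gs" and v: "v \<in> Qm gs n" and w: "length w = n"
  shows "csv gs n v \<in> CL (chunks gs w)"
  unfolding CL_def
proof (intro CollectI conjI allI impI)
  have vp: "v permutes {1..n}" using v by (simp add: Qm_def)
  show "set (csv gs n v) \<subseteq> {..<length (chunks gs w)}"
  proof
    fix c assume "c \<in> set (csv gs n v)"
    then obtain j where j: "j < n" "c = blk gs (v (Suc j))" by (auto simp: csv_def)
    have "1 \<le> v (Suc j)" "v (Suc j) \<le> n" using perm_range[OF vp, of "Suc j"] j by auto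
    then have "c < length gs" using blk_props[of "v (Suc j)" gs] n j by auto
    then show "c \<in> {..<length (chunks gs w)}" by simp
  qed
  fix c assume "c < length (chunks gs w)"
  then have c: "c < length gs" by simp
  define B where "B = {y. 1 \<le> y \<and> y \<le> n \<and> blk gs (v y) = c}"
  define I where "I = {i. i < n \<and> blk gs (v (Suc i)) = c}"
  have BI: "B = Suc ` I"
  proof
    show "B \<subseteq> Suc ` I"
    proof
      fix y assume y: "y \<in> B"
      then have "y = Suc (y - 1)" "y - 1 \<in> I" by (auto simp: B_def I_def)
      then show "y \<in> Suc ` I" by (metis imageI)
    qed
    show "Suc ` I \<subseteq> B" by (auto simp: B_def I_def)
  qed
  have cnt: "count_list (csv gs n v) c = card I"
  proof -
    have "{i. i < length (csv gs n v) \<and> csv gs n v ! i = c} = I"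
      by (auto simp: I_def csv_def)
    then show ?thesis by (simp add: count_as_card)
  qed
  have cB: "card B = card I" unfolding BI by (rule card_image) simp
  have offc: "off gs c + gs!c \<le> n" using off_Suc[OF c] off_le_sum[of gs "Suc c"] n by simp
  have img: "v ` B = {off gs c + 1..off gs c + gs!c}"
  proof
    show "v ` B \<subseteq> {off gs c + 1..off gs c + gs!c}"
    proof
      fix z assume "z \<in> v ` B"
      then obtain y where y: "y \<in> B" "z = v y" by blast
      have y1: "1 \<le> y" "y \<le> n" "blk gs (v y) = c" using y by (auto simp: B_def)
      have vy: "1 \<le> v y" "v y \<le> n" using perm_range[OF vp y1(1,2)] by auto
      have "off gs (blk gs (v y)) < v y \<and> v y \<le> off gs (blk gs (v y)) + gs ! (blk gs (v y))"
        using blk_props[of "v y" gs] vy n by auto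
      then show "z \<in> {off gs c + 1..off gs c + gs!c}" using y y1 by auto
    qed
    show "{off gs c + 1..off gs c + gs!c} \<subseteq> v ` B"
    proof
      fix z assume z: "z \<in> {off gs c + 1..off gs c + gs!c}"
      have z1: "1 \<le> z" "z \<le> n" using z offc by auto
      have bz: "blk gs z = c" using z c by (intro blk_eq) auto
      define y where "y = inv v z"
      have vy: "v y = z" by (simp add: y_def permutes_inverses(1)[OF vp])
      have "z \<in> {1..n}" using z1 by simp
      then have "y \<in> {1..n}" unfolding y_def by (simp only: permutes_in_image[OF permutes_inv[OF vp]])
      then have "y \<in> B" using bz vy by (simp add: B_def)
      then show "z \<in> v ` B" using vy by (metis imageI)
    qed
  qed
  have "card (v ` B) = card B"
    by (rule card_image[OF permutes_inj_on[OF vp]])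
  then have "card B = gs ! c" using img by simp
  moreover have "length (chunks gs w ! c) = gs ! c" using length_nth_chunks[OF c] w n by simp
  ultimately show "count_list (csv gs n v) c = length (chunks gs w ! c)"
    using cnt cB by simp
qed

lemma vcs_csv:
  assumes n: "n = sum_list gs" and v: "v \<in> Qm gs n"
  shows "vcs gs n (csv gs n v) = v"
proof
  fix x
  have vp: "v permutes {1..n}" using v by (simp add: Qm_def)
  show "vcs gs n (csv gs n v) x = v x"
  proof (cases "1 \<le> x \<and> x \<le> n")
    case True
    then have "x - 1 < n" "Suc (x - 1) = x" by auto
    then have "csv gs n v ! (x - 1) = blk gs (v x)" by (simp add: csv_def)
    then show ?thesis using key_count[OF n v] True by (simp add: vcs_def)
  next
    case False
    then have "x \<notin> {1..n}" by simp
    then have "v x = x" using permutes_not_in[OF vp] by simp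
    moreover have "vcs gs n (csv gs n v) x = x" unfolding vcs_def by (simp only: if_not_P[OF False])
    ultimately show ?thesis by simp
  qed
qed

lemma CL_chunks_length:
  assumes "cs \<in> CL (chunks gs w)" "length w = sum_list gs"
  shows "length cs = sum_list gs"
proof -
  have "length cs = (\<Sum>k<length gs. length (chunks gs w ! k))" using CL_length[OF assms(1)] by simp
  also have "\<dots> = (\<Sum>k<length gs. gs ! k)"
    by (rule sum.cong) (auto simp: length_nth_chunks[OF _ assms(2)])
  also have "\<dots> = sum_list gs" by (simp add: sum_list_sum_nth atLeast0LessThan[symmetric])
  finally show ?thesis .
qed

lemma cnt_strict:
  assumes "j < j'" "j < length cs" "cs ! j = c"
  shows "count_list (take j cs) c < count_list (take j' cs) c"
proof -
  have "count_list (take j cs) c < count_list (take (Suc j) cs) c"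
    using assms by (simp add: take_Suc_conv_app_nth)
  also have "take (Suc j) cs = take (Suc j) (take j' cs)" using assms by (simp add: min_def)
  also have "count_list \<dots> c \<le> count_list (take j' cs) c" by (rule count_take_le)
  finally show ?thesis .
qed

lemma vcs_props:
  assumes n: "n = sum_list gs" and cs: "cs \<in> CL (chunks gs w)" and w: "length w = n"
    and x: "1 \<le> x" "x \<le> n"
  shows "blk gs (vcs gs n cs x) = cs ! (x - 1) \<and> 1 \<le> vcs gs n cs x \<and> vcs gs n cs x \<le> n"
proof -
  have lcs: "length cs = n" using CL_chunks_length[OF cs] w n by simp
  define c where "c = cs ! (x - 1)"
  have xl: "x - 1 < length cs" using x lcs by simp
  have c: "c < length gs" using cs nth_mem[OF xl] by (auto simp: CL_def c_def)
  have "count_list (take (x-1) cs) c < count_list (take (Suc (x - 1)) cs) c"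
    using xl by (simp add: take_Suc_conv_app_nth c_def)
  also have "\<dots> \<le> count_list cs c" by (rule count_take_le)
  also have "\<dots> = gs ! c" using cs c length_nth_chunks[OF c] w n by (simp add: CL_def)
  finally have lt: "count_list (take (x-1) cs) c < gs ! c" .
  have offc: "off gs c + gs!c \<le> n" using off_Suc[OF c] off_le_sum[of gs "Suc c"] n by simp
  have v: "vcs gs n cs x = off gs c + count_list (take (x-1) cs) c + 1"
    using x by (simp add: vcs_def c_def)
  have "blk gs (vcs gs n cs x) = c" unfolding v using c lt by (intro blk_eq) auto
  then show ?thesis using v lt offc by (simp add: c_def)
qed

lemma csv_vcs:
  assumes n: "n = sum_list gs" and cs: "cs \<in> CL (chunks gs w)" and w: "length w = n"
  shows "csv gs n (vcs gs n cs) = cs"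
proof (rule nth_equalityI)
  show "length (csv gs n (vcs gs n cs)) = length cs"
    using CL_chunks_length[OF cs] w n by (simp add: csv_def)
  fix j assume "j < length (csv gs n (vcs gs n cs))"
  then have j: "j < n" by (simp add: csv_def)
  then show "csv gs n (vcs gs n cs) ! j = cs ! j"
    using vcs_props[OF n cs w, of "Suc j"] by (simp add: csv_def)
qed

lemma vcs_Qm:
  assumes n: "n = sum_list gs" and cs: "cs \<in> CL (chunks gs w)" and w: "length w = n"
  shows "vcs gs n cs \<in> Qm gs n"
proof -
  define f where "f = vcs gs n cs"
  have lcs: "length cs = n" using CL_chunks_length[OF cs] w n by simp
  have fP: "\<And>x. 1 \<le> x \<Longrightarrow> x \<le> n \<Longrightarrow> blk gs (f x) = cs ! (x - 1) \<and> 1 \<le> f x \<and> f x \<le> n"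
    unfolding f_def using vcs_props[OF n cs w] by blast
  have mono: "f x < f y" if xy: "1 \<le> x" "x < y" "y \<le> n" "blk gs (f x) = blk gs (f y)" for x y
  proof -
    have e: "cs ! (x - 1) = cs ! (y - 1)" using fP[of x] fP[of y] xy by simp
    have "count_list (take (x-1) cs) (cs ! (x - 1)) < count_list (take (y-1) cs) (cs ! (x - 1))"
      using xy lcs by (intro cnt_strict) auto
    then show ?thesis using xy e by (simp add: f_def vcs_def)
  qed
  have inj: "inj_on f {1..n}"
  proof (rule inj_onI)
    fix x y assume x: "x \<in> {1..n}" and y: "y \<in> {1..n}" and e: "f x = f y"
    show "x = y"
    proof (rule ccontr)
      assume "x \<noteq> y"
      then have "x < y \<or> y < x" by auto
      then show False
      proof
        assume "x < y" then have "f x < f y" using mono[of x y] x y e by simp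
        then show False using e by simp
      next
        assume "y < x" then have "f y < f x" using mono[of y x] x y e by simp
        then show False using e by simp
      qed
    qed
  qed
  have sub: "f ` {1..n} \<subseteq> {1..n}" using fP by auto
  have "f ` {1..n} = {1..n}" by (rule endo_inj_surj[OF _ sub inj]) simp
  then have "bij_betw f {1..n} {1..n}" using inj by (simp add: bij_betw_def)
  moreover have "\<And>x. x \<notin> {1..n} \<Longrightarrow> f x = x" by (auto simp: f_def vcs_def)
  ultimately have "f permutes {1..n}" by (rule bij_imp_permutes)
  then show ?thesis using mono by (simp add: Qm_def f_def)
qed

lemma merge_csv:
  assumes n: "n = sum_list gs" and v: "v \<in> Qm gs n" and w: "length w = n"
  shows "merge (csv gs n v) (chunks gs w) = act w v"
proof (rule nth_equalityI)
  show "length (merge (csv gs n v) (chunks gs w)) = length (act w v)"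
    using w by (simp add: csv_def act_def)
  fix j assume "j < length (merge (csv gs n v) (chunks gs w))"
  then have j: "j < n" by (simp add: csv_def)
  have vp: "v permutes {1..n}" using v by (simp add: Qm_def)
  define c where "c = blk gs (v (Suc j))"
  define k where "k = count_list (take j (csv gs n v)) c"
  have vj: "1 \<le> v (Suc j)" "v (Suc j) \<le> n" using perm_range[OF vp, of "Suc j"] j by auto
  have P: "c < length gs" "off gs c < v (Suc j)" "v (Suc j) \<le> off gs c + gs ! c"
    using blk_props[of "v (Suc j)" gs] vj n by (auto simp: c_def)
  have K: "v (Suc j) = off gs c + k + 1" using key_count[OF n v, of "Suc j"] j by (simp add: c_def k_def)
  have kl: "k < gs ! c" using K P by simp
  have "merge (csv gs n v) (chunks gs w) ! j = chunks gs w ! c ! k"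
    using j by (simp add: nth_merge csv_def c_def k_def)
  also have "\<dots> = w ! (off gs c + k)" using nth_nth_chunks[OF P(1) _ kl] w n by simp
  also have "\<dots> = act w v ! j" using j w K by (simp add: act_def del: upt_Suc)
  finally show "merge (csv gs n v) (chunks gs w) ! j = act w v ! j" .
qed

lemma sum_Qm_CL:
  assumes n: "n = sum_list gs" and w: "length w = n"
  shows "(\<Sum>v\<in>Qm gs n. F (act w v)) = (\<Sum>cs\<in>CL (chunks gs w). F (merge cs (chunks gs w)))"
proof (rule sum.reindex_bij_witness[where i = "vcs gs n" and j = "csv gs n"])
  fix v assume v: "v \<in> Qm gs n"
  show "vcs gs n (csv gs n v) = v" using vcs_csv[OF n v] .
  show "csv gs n v \<in> CL (chunks gs w)" using csv_CL[OF n v w] .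
  show "F (merge (csv gs n v) (chunks gs w)) = F (act w v)" using merge_csv[OF n v w] by simp
next
  fix cs assume cs: "cs \<in> CL (chunks gs w)"
  show "csv gs n (vcs gs n cs) = cs" using csv_vcs[OF n cs w] .
  show "vcs gs n cs \<in> Qm gs n" using vcs_Qm[OF n cs w] .
qed


lemma fprod_homog:
  assumes "length ds = length as" "\<forall>k<length as. homog (ds!k) (as!k)"
  shows "homog (sum_list ds) (fprod as)"
  using assms
proof (induction as arbitrary: ds)
  case Nil then show ?case by (simp add: fprod_Nil homog_fone)
next
  case (Cons a as)
  obtain d ds' where ds: "ds = d # ds'" using Cons.prems(1) by (cases ds) auto
  have "homog d a" using Cons.prems(2) ds by force
  moreover have "homog (sum_list ds') (fprod as)"
    using Cons.prems ds by (intro Cons.IH) force+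
  ultimately show ?case by (simp add: ds fprod_Cons homog_fmul)
qed

lemma fprod_lsupp:
  assumes "\<forall>a\<in>set as. lsupp A a"
  shows "lsupp A (fprod as)"
  using assms by (induction as) (auto simp: fprod_Nil fprod_Cons lsupp_fone lsupp_fmul)

lemma fprod_eval:
  assumes "length ds = length as" "\<forall>k<length as. homog (ds!k) (as!k)" "length w = sum_list ds"
  shows "fprod as w = (\<Prod>k<length as. (as!k) (chunks ds w ! k))"
  using assms
proof (induction as arbitrary: ds w)
  case Nil then show ?case by (simp add: fprod_Nil fone_def)
next
  case (Cons a as)
  obtain d ds' where ds: "ds = d # ds'" using Cons.prems(1) by (cases ds) auto
  have ha: "homog d a" using Cons.prems(2) ds by force
  have dl: "d \<le> length w" using Cons.prems(3) ds by simp
  have "fprod (a # as) w = a (take d w) * fprod as (drop d w)"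
    unfolding fprod_Cons by (rule fmul_homog_left[OF ha dl])
  also have "fprod as (drop d w) = (\<Prod>k<length as. (as!k) (chunks ds' (drop d w) ! k))"
    using Cons.prems ds by (intro Cons.IH) force+
  moreover have "(\<Prod>k<length (a # as). ((a#as)!k) (chunks ds w ! k)) =
     ((a#as)!0) (chunks ds w ! 0) * (\<Prod>k<length as. ((a#as)!Suc k) (chunks ds w ! Suc k))"
    by (simp only: length_Cons prod.lessThan_Suc_shift)
  ultimately show ?case by (simp add: ds)
qed

lemma act_nth: "j < length w \<Longrightarrow> act w v ! j = w ! (v (Suc j) - 1)"
  by (simp add: act_def del: upt_Suc)

lemma length_act[simp]: "length (act w v) = length w"
  by (simp add: act_def del: upt_Suc)

lemma act_comp:
  assumes w: "length w = n" and v: "v permutes {1..n}"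
  shows "act (act w u) v = act w (u \<circ> v)"
proof (rule nth_equalityI)
  fix j assume "j < length (act (act w u) v)"
  then have j: "j < n" using w by simp
  have "1 \<le> v (Suc j) \<and> v (Suc j) \<le> n" using perm_range[OF v, of "Suc j"] j by simp
  then have "v (Suc j) - 1 < length w" "Suc (v (Suc j) - 1) = v (Suc j)" using w by auto
  then show "act (act w u) v ! j = act w (u \<circ> v) ! j"
    using j w by (simp add: act_nth)
qed simp

lemma act_id: "act w id = w"
  by (rule nth_equalityI) (simp_all add: act_nth)

lemma set_act:
  assumes w: "length w = n" and v: "v permutes {1..n}"
  shows "set (act w v) \<subseteq> set w"
proof
  fix a assume "a \<in> set (act w v)"
  then obtain j where j: "j < n" "a = act w v ! j" using w by (auto simp: in_set_conv_nth)
  have "1 \<le> v (Suc j) \<and> v (Suc j) \<le> n" using perm_range[OF v, of "Suc j"] j by simp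
  then have "v (Suc j) - 1 < length w" using w by auto
  then show "a \<in> set w" using j w by (simp add: act_nth)
qed

lemma ract_eval:
  assumes u: "u permutes {1..n}" and w': "length w' = n" "set w' \<subseteq> {1..n}"
  shows "ract n f u w' = f (act w' (inv u))"
proof -
  define W where "W = {w. length w = length w' \<and> set w \<subseteq> {1..n}}"
  define w0 where "w0 = act w' (inv u)"
  have fin: "finite W" unfolding W_def using finite_lists_length_eq[of "{1..n}" "length w'"]
    by (simp add: conj_commute)
  have iu: "inv u permutes {1..n}" using permutes_inv[OF u] .
  have w0W: "w0 \<in> W" using set_act[OF w'(1) iu] w' by (auto simp: W_def w0_def)
  have eq: "(act w u = w') = (w = w0)" if "w \<in> W" for w
  proof
    assume "act w u = w'"
    then have "w0 = act w (u \<circ> inv u)" unfolding w0_def using act_comp[of w n "inv u" u] that iu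
      by (simp add: W_def w')
    then show "w = w0" by (simp add: permutes_inv_o(1)[OF u] act_id)
  next
    assume "w = w0"
    then have "act w u = act w' (inv u \<circ> u)" unfolding w0_def using act_comp[OF w'(1) u] by simp
    then show "act w u = w'" by (simp add: permutes_inv_o(2)[OF u] act_id)
  qed
  have "ract n f u w' = (\<Sum>w\<in>W. if w = w0 then f w else 0)"
    unfolding ract_def W_def[symmetric] by (rule sum.cong[OF refl]) (simp add: eq)
  also have "\<dots> = f w0" using sum.delta[OF fin, of w0 f] w0W by simp
  finally show ?thesis by (simp add: w0_def)
qed

lemma ract_zero_len:
  assumes "homog n f" "length w' \<noteq> n"
  shows "ract n f u w' = 0"
  unfolding ract_def by (rule sum.neutral) (use assms in \<open>auto simp: homogD\<close>)

lemma ract_zero_set: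
  assumes u: "u permutes {1..n}" and w': "length w' = n" "\<not> set w' \<subseteq> {1..n}"
  shows "ract n f u w' = 0"
  unfolding ract_def
proof (rule sum.neutral, rule ballI)
  fix w assume w: "w \<in> {w. length w = length w' \<and> set w \<subseteq> {1..n}}"
  have "act w u \<noteq> w'"
  proof
    assume "act w u = w'"
    then have "set w' \<subseteq> set w" using set_act[of w n u] w w' u by auto
    then show False using w w' by auto
  qed
  then show "(if act w u = w' then f w else 0) = 0" by simp
qed

lemma perm_from_inj:
  assumes "finite S" "f ` S \<subseteq> S" "inj_on f S" "\<And>x. x \<notin> S \<Longrightarrow> f x = x"
  shows "f permutes S"
proof -
  have "f ` S = S" by (rule endo_inj_surj[OF assms(1,2,3)])
  then have "bij_betw f S S" using assms(3) by (simp add: bij_betw_def)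
  then show ?thesis using assms(4) by (rule bij_imp_permutes)
qed

lemma sum_perm_shift:
  "(\<Sum>chi | chi permutes {1..p}. H (\<lambda>k. chi (Suc k) - 1)) = (\<Sum>tau | tau permutes {..<p}. H tau)"
proof (rule sum.reindex_bij_witness[where i = "\<lambda>tau i. if i = 0 then 0 else Suc (tau (i - 1))"
      and j = "\<lambda>chi k. chi (Suc k) - 1"])
  fix chi assume "chi \<in> {chi. chi permutes {1..p}}"
  then have chi: "chi permutes {1..p}" by simp
  have ge1: "chi i \<ge> 1" if "i \<ge> 1" for i
  proof (cases "i \<le> p")
    case True then show ?thesis using perm_range[OF chi, of i] that by simp
  next
    case False then have "i \<notin> {1..p}" by simp
    then show ?thesis using permutes_not_in[OF chi] that by simp
  qed
  have c0: "chi 0 = 0" using permutes_not_in[OF chi, of 0] by simp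
  show "(\<lambda>i. if i = 0 then 0 else Suc (chi (Suc (i - 1)) - 1)) = chi"
  proof
    fix i show "(if i = 0 then 0 else Suc (chi (Suc (i - 1)) - 1)) = chi i"
      using c0 ge1[of i] by (cases i) auto
  qed
  have "(\<lambda>k. chi (Suc k) - 1) permutes {..<p}"
  proof (rule perm_from_inj)
    show "(\<lambda>k. chi (Suc k) - 1) ` {..<p} \<subseteq> {..<p}"
    proof
      fix y assume "y \<in> (\<lambda>k. chi (Suc k) - 1) ` {..<p}"
      then obtain k where k: "k < p" "y = chi (Suc k) - 1" by auto
      then show "y \<in> {..<p}" using perm_range[OF chi, of "Suc k"] by auto
    qed
    show "inj_on (\<lambda>k. chi (Suc k) - 1) {..<p}"
    proof (rule inj_onI)
      fix k k' assume "chi (Suc k) - 1 = chi (Suc k') - 1"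
      then have "chi (Suc k) = chi (Suc k')" using ge1[of "Suc k"] ge1[of "Suc k'"] by simp
      then show "k = k'" using inj_eq[OF permutes_inj[OF chi]] by simp
    qed
    fix x assume "x \<notin> {..<p}"
    then have "Suc x \<notin> {1..p}" by simp
    then show "chi (Suc x) - 1 = x" using permutes_not_in[OF chi] by simp
  qed simp
  then show "(\<lambda>k. chi (Suc k) - 1) \<in> {tau. tau permutes {..<p}}" by simp
next
  fix tau assume "tau \<in> {tau. tau permutes {..<p}}"
  then have tau: "tau permutes {..<p}" by simp
  show "(\<lambda>k. (if Suc k = 0 then 0 else Suc (tau (Suc k - 1))) - 1) = tau" by simp
  have tr: "tau k < p" if "k < p" for k
  proof -
    have "k \<in> {..<p}" using that by simp
    then have "tau k \<in> {..<p}" by (simp only: permutes_in_image[OF tau])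
    then show ?thesis by simp
  qed
  have "(\<lambda>i. if i = 0 then 0 else Suc (tau (i - 1))) permutes {1..p}"
  proof (rule perm_from_inj)
    show "(\<lambda>i. if i = 0 then 0 else Suc (tau (i - 1))) ` {1..p} \<subseteq> {1..p}"
      using tr by (auto simp: Suc_le_eq)
    show "inj_on (\<lambda>i. if i = 0 then 0 else Suc (tau (i - 1))) {1..p}"
    proof (rule inj_onI)
      fix i i' assume i: "i \<in> {1..p}" "i' \<in> {1..p}"
        and e: "(if i = 0 then 0 else Suc (tau (i - 1))) = (if i' = 0 then 0 else Suc (tau (i' - 1)))"
      then have "tau (i - 1) = tau (i' - 1)" by simp
      then have e2: "i - 1 = i' - 1" using inj_eq[OF permutes_inj[OF tau]] by simp
      have "1 \<le> i" "1 \<le> i'" using i by auto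
      then show "i = i'" using e2 by linarith
    qed
    fix x assume "x \<notin> {1..p}"
    then have "x = 0 \<or> x > p" by auto
    then show "(if x = 0 then 0 else Suc (tau (x - 1))) = x"
    proof
      assume "x > p"
      then have "x - 1 \<notin> {..<p}" by simp
      then have "tau (x - 1) = x - 1" using permutes_not_in[OF tau] by simp
      then show ?thesis using \<open>x > p\<close> by simp
    qed simp
  qed simp
  then show "(\<lambda>i. if i = 0 then 0 else Suc (tau (i - 1))) \<in> {chi. chi permutes {1..p}}" by simp
qed simp


lemma lsupp_mono: "lsupp S f \<Longrightarrow> S \<subseteq> A \<Longrightarrow> lsupp A f"
  unfolding lsupp_def by blast

declare upt_Suc[simp del]

theorem lemma5p1:
  fixes n :: nat and \<beta> \<gamma> :: "nat list"
  assumes "composition n \<beta>" and "composition n \<gamma>" and "length \<beta> = length \<gamma>"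
  shows "ractB n (Vcomp \<beta> :: 'k::comm_ring_1 fa) (SetC \<gamma>) =
    (\<Sum>\<chi>\<in>{\<chi>. \<chi> permutes {1..length \<beta>} \<and>
               (\<forall>i\<in>{1..length \<beta>}. \<beta> ! (\<chi> i - 1) = \<gamma> ! (i - 1))}.
        fprod (map (\<lambda>i. Vset (block \<beta> (\<chi> i))) [1..<length \<beta> + 1]))"
proof -
  have posb: "\<forall>a\<in>set \<beta>. 0 < a" and nb: "n = sum_list \<beta>" using assms(1) by (auto simp: composition_def)
  have posg: "\<forall>a\<in>set \<gamma>. 0 < a" and ng: "n = sum_list \<gamma>" using assms(2) by (auto simp: composition_def)
  define p where "p = length \<beta>"
  have pg: "length \<gamma> = p" using assms(3) by (simp add: p_def)
  define Q where "Q = (\<lambda>i. Vset (block \<beta> i) :: 'k fa)"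
  define X where "X = {\<chi>. \<chi> permutes {1..p} \<and> (\<forall>i\<in>{1..p}. \<beta> ! (\<chi> i - 1) = \<gamma> ! (i - 1))}"
  define L where "L = (\<lambda>\<chi>. map (\<lambda>i. Q (\<chi> i)) [1..<p + 1])"
  have Qp: "prim (Q i) \<and> homog (\<beta>!(i-1)) (Q i) \<and> lsupp {1..n} (Q i)" if i: "1 \<le> i" "i \<le> p" for i
  proof -
    have il: "i - 1 < length \<beta>" using i by (simp add: p_def)
    have oi: "off \<beta> i = off \<beta> (i - 1) + \<beta>!(i-1)" using off_Suc[OF il] i by simp
    have bl: "block \<beta> i = {off \<beta> (i-1) + 1 .. off \<beta> i}" by (simp add: block_def off_def)
    have pos: "\<beta>!(i-1) > 0" using posb il by simp
    have fin: "finite (block \<beta> i)" using bl by simp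
    have ne: "block \<beta> i \<noteq> {}" using bl oi pos by simp
    have card: "card (block \<beta> i) = \<beta>!(i-1)" using bl oi by simp
    have sub: "block \<beta> i \<subseteq> {1..n}" using bl off_le_sum[of \<beta> i] nb by auto
    show ?thesis using Vset_props[OF fin ne] card sub lsupp_mono unfolding Q_def by metis
  qed
  have Xhom: "\<forall>k<length (L \<chi>). homog (\<gamma>!k) (L \<chi> ! k)" if chi: "\<chi> \<in> X" for \<chi>
  proof (intro allI impI)
    fix k assume "k < length (L \<chi>)"
    then have k: "k < p" by (simp add: L_def)
    have cp: "\<chi> permutes {1..p}" using chi by (simp add: X_def)
    have r: "1 \<le> \<chi> (Suc k) \<and> \<chi> (Suc k) \<le> p" using perm_range[OF cp, of "Suc k"] k by simp
    have "\<beta> ! (\<chi> (Suc k) - 1) = \<gamma> ! k" using chi k by (auto simp: X_def)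
    moreover have "L \<chi> ! k = Q (\<chi> (Suc k))" using k by (simp add: L_def nth_map_upt)
    ultimately show "homog (\<gamma>!k) (L \<chi> ! k)" using Qp[of "\<chi> (Suc k)"] r by simp
  qed
  have Xls: "\<forall>a\<in>set (L \<chi>). lsupp {1..n} a" if chi: "\<chi> \<in> X" for \<chi>
  proof
    fix a assume "a \<in> set (L \<chi>)"
    then obtain i where i: "1 \<le> i" "i \<le> p" "a = Q (\<chi> i)" by (auto simp: L_def)
    have cp: "\<chi> permutes {1..p}" using chi by (simp add: X_def)
    have "1 \<le> \<chi> i \<and> \<chi> i \<le> p" using perm_range[OF cp i(1,2)] .
    then show "lsupp {1..n} a" using Qp i by blast
  qed
  define Ps where "Ps = map Q [1..<p + 1]"
  have V: "Vcomp \<beta> = fprod Ps" by (simp add: Vcomp_def Ps_def Q_def p_def)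
  have lPs: "length Ps = p" by (simp add: Ps_def)
  have Psn: "Ps ! j = Q (Suc j)" if "j < p" for j using that by (simp add: Ps_def nth_map_upt)
  have Vhom: "homog n (fprod Ps)"
  proof -
    have "homog (sum_list \<beta>) (fprod Ps)"
    proof (rule fprod_homog)
      show "length \<beta> = length Ps" using lPs by (simp add: p_def)
      show "\<forall>k<length Ps. homog (\<beta> ! k) (Ps ! k)"
      proof (intro allI impI)
        fix k assume "k < length Ps"
        then have k: "k < p" using lPs by simp
        have "homog (\<beta> ! (Suc k - 1)) (Q (Suc k))" using Qp[of "Suc k"] k by simp
        then show "homog (\<beta> ! k) (Ps ! k)" using Psn[OF k] by simp
      qed
    qed
    then show ?thesis using nb by simp
  qed
  define Pd where "Pd = {u. u permutes {1..n} \<and> Des n u \<subseteq> SetC \<gamma>}"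
  have LHS: "ractB n (Vcomp \<beta> :: 'k fa) (SetC \<gamma>) w = (\<Sum>u\<in>Pd. ract n (fprod Ps) u w)" for w
    unfolding ractB_def V Pd_def by (simp add: sum_fun_apply)
  have RHS: "(\<Sum>\<chi>\<in>X. fprod (L \<chi>)) w = (\<Sum>\<chi>\<in>X. fprod (L \<chi>) w)" for w
    by (simp add: sum_fun_apply)
  have "ractB n (Vcomp \<beta> :: 'k fa) (SetC \<gamma>) = (\<Sum>\<chi>\<in>X. fprod (L \<chi>))"
  proof
    fix w
    show "ractB n (Vcomp \<beta> :: 'k fa) (SetC \<gamma>) w = (\<Sum>\<chi>\<in>X. fprod (L \<chi>)) w"
    proof (cases "length w = n")
      case False
      have "ractB n (Vcomp \<beta> :: 'k fa) (SetC \<gamma>) w = 0"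
        using LHS[of w] ract_zero_len[OF Vhom False] by simp
      moreover have "(\<Sum>\<chi>\<in>X. fprod (L \<chi>)) w = 0"
        unfolding RHS[of w]
      proof (rule sum.neutral, rule ballI)
        fix \<chi> assume chi: "\<chi> \<in> X"
        have "homog (sum_list \<gamma>) (fprod (L \<chi>))"
          using Xhom[OF chi] pg by (intro fprod_homog) (simp_all add: L_def)
        then show "fprod (L \<chi>) w = 0" using False ng homogD by metis
      qed
      ultimately show ?thesis by simp
    next
      case True
      note wl = True
      show ?thesis
      proof (cases "set w \<subseteq> {1..n}")
        case False
        have "ractB n (Vcomp \<beta> :: 'k fa) (SetC \<gamma>) w = 0"
          unfolding LHS[of w] by (rule sum.neutral) (use ract_zero_set[OF _ wl False] Pd_def in blast)
        moreover have "(\<Sum>\<chi>\<in>X. fprod (L \<chi>)) w = 0"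
          unfolding RHS[of w]
        proof (rule sum.neutral, rule ballI)
          fix \<chi> assume chi: "\<chi> \<in> X"
          have "lsupp {1..n} (fprod (L \<chi>))" using Xls[OF chi] by (rule fprod_lsupp)
          then show "fprod (L \<chi>) w = 0" using False lsuppD by metis
        qed
        ultimately show ?thesis by simp
      next
        case True
        note ws = True
        define xs where "xs = chunks \<gamma> w"
        have lxs: "length xs = p" using pg by (simp add: xs_def)
        have xsne: "\<forall>m<length xs. xs!m \<noteq> []"
        proof (intro allI impI)
          fix m assume "m < length xs"
          then have m: "m < length \<gamma>" using lxs pg by simp
          have "length (xs!m) = \<gamma>!m" using length_nth_chunks[OF m] wl ng by (simp add: xs_def)
          moreover have "\<gamma>!m > 0" using posg m by simp
          ultimately show "xs!m \<noteq> []" by auto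
        qed
        have primPs: "\<forall>P\<in>set Ps. prim P" using Qp by (auto simp: Ps_def)
        have "ractB n (Vcomp \<beta> :: 'k fa) (SetC \<gamma>) w = (\<Sum>u\<in>Pd. fprod Ps (act w (inv u)))"
          unfolding LHS[of w] by (rule sum.cong[OF refl]) (use ract_eval wl ws Pd_def in blast)
        also have "\<dots> = (\<Sum>v\<in>Qm \<gamma> n. fprod Ps (act w v))"
          unfolding Pd_def by (rule sum_Pdes_Qm[OF posg ng])
        also have "\<dots> = (\<Sum>cs\<in>CL xs. fprod Ps (merge cs xs))"
          unfolding xs_def by (rule sum_Qm_CL[OF ng wl])
        also have "\<dots> = cdelta (fprod Ps) xs" by (simp add: cdelta_def)
        also have "\<dots> = (\<Sum>tau | tau permutes {..<p}. \<Prod>m<p. (Ps ! (tau m)) (xs!m))"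
          using cdelta_fprod_perm[OF primPs _ xsne] lPs lxs by simp
        also have "\<dots> = (\<Sum>tau | tau permutes {..<p}. \<Prod>m<p. Q (Suc (tau m)) (xs!m))"
        proof (intro sum.cong refl prod.cong)
          fix tau m assume tau: "tau \<in> {tau. tau permutes {..<p}}" and m: "m \<in> {..<p}"
          have "m \<in> {..<p}" using m .
          then have "tau m \<in> {..<p}" using tau by (simp only: mem_Collect_eq permutes_in_image)
          then show "(Ps ! (tau m)) (xs!m) = Q (Suc (tau m)) (xs!m)" using Psn by simp
        qed
        also have "\<dots> = (\<Sum>\<chi> | \<chi> permutes {1..p}. \<Prod>m<p. Q (Suc (\<chi> (Suc m) - 1)) (xs!m))"
          by (rule sum_perm_shift[symmetric])
        also have "\<dots> = (\<Sum>\<chi> | \<chi> permutes {1..p}. \<Prod>m<p. Q (\<chi> (Suc m)) (xs!m))"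
        proof (intro sum.cong refl prod.cong)
          fix \<chi> m assume chi: "\<chi> \<in> {\<chi>. \<chi> permutes {1..p}}" and m: "m \<in> {..<p}"
          have "1 \<le> \<chi> (Suc m)" using perm_range[of \<chi> p "Suc m"] chi m by simp
          then show "Q (Suc (\<chi> (Suc m) - 1)) (xs!m) = Q (\<chi> (Suc m)) (xs!m)" by simp
        qed
        also have "\<dots> = (\<Sum>\<chi>\<in>X. \<Prod>m<p. Q (\<chi> (Suc m)) (xs!m))"
        proof (rule sum.mono_neutral_right)
          show "finite {\<chi>. \<chi> permutes {1..p}}" by (rule finite_permutations) simp
          show "X \<subseteq> {\<chi>. \<chi> permutes {1..p}}" by (auto simp: X_def)
          show "\<forall>\<chi>\<in>{\<chi>. \<chi> permutes {1..p}} - X. (\<Prod>m<p. Q (\<chi> (Suc m)) (xs!m)) = 0"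
          proof
            fix \<chi> assume chi: "\<chi> \<in> {\<chi>. \<chi> permutes {1..p}} - X"
            then have cp: "\<chi> permutes {1..p}" by simp
            then obtain i where i: "i \<in> {1..p}" "\<beta> ! (\<chi> i - 1) \<noteq> \<gamma> ! (i - 1)"
              using chi by (auto simp: X_def)
            define m where "m = i - 1"
            have m: "m < p" "Suc m = i" using i by (auto simp: m_def)
            have r: "1 \<le> \<chi> i \<and> \<chi> i \<le> p" using perm_range[OF cp] i by simp
            have h: "homog (\<beta> ! (\<chi> i - 1)) (Q (\<chi> i))" using Qp r by blast
            have "length (xs!m) = \<gamma>!m" using length_nth_chunks[of m \<gamma> w] m pg wl ng by (simp add: xs_def)
            then have "Q (\<chi> (Suc m)) (xs!m) = 0" using h i m homogD by (metis m_def)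
            then show "(\<Prod>m<p. Q (\<chi> (Suc m)) (xs!m)) = 0" using m by (intro prod_zero) auto
          qed
        qed
        also have "\<dots> = (\<Sum>\<chi>\<in>X. fprod (L \<chi>) w)"
        proof (rule sum.cong[OF refl])
          fix \<chi> assume chi: "\<chi> \<in> X"
          have "fprod (L \<chi>) w = (\<Prod>k<length (L \<chi>). (L \<chi> ! k) (chunks \<gamma> w ! k))"
            using Xhom[OF chi] pg wl ng by (intro fprod_eval) (simp_all add: L_def)
          also have "\<dots> = (\<Prod>m<p. Q (\<chi> (Suc m)) (xs!m))"
            by (intro prod.cong) (auto simp: L_def xs_def nth_map_upt)
          finally show "(\<Prod>m<p. Q (\<chi> (Suc m)) (xs!m)) = fprod (L \<chi>) w" by simp
        qed
        finally show ?thesis unfolding RHS[of w] .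
      qed
    qed
  qed
  then show ?thesis by (simp add: X_def L_def Q_def p_def)
qed


end
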